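(* Assume the axiomatic setting described in the context, with Axioms (A1)–(A5). Let $T_1,\dots,T_N$ be an $(N,\delta)$-hairbrush. Then for every $\epsilon>0$ and every $p$ with $\frac{\alpha+2}{\alpha+1}\le p\le2$, $$\int\Big(\sum_{j=1}^N\chi_{T_j}\Big)^p\,d\mu\le C_{p,\epsilon}\,\delta^T N\,\delta^{\lambda+\alpha+1-p(\lambda+\alpha)-\epsilon},$$ where $C_{p,\epsilon}$ depends only on $p$, $\epsilon$ and the data of the setting.
   Context: Let $(X,d)$ be a complete separable metric space with a Borel measure $\mu$ and constants $Q>1/2$, $C_0\in(0,\infty)$ such that $\mu(B_d(x,r))\le C_0r^Q$ for all $x\in X$ and $0<r<\mathrm{diam}_d(X)$ ($B_d$ closed balls). Let $d'$ be a second metric on $X$ with $(X,d')$ separable. Let $(Z,d_Z)$ be a metric space, $Y\subset Z$ compact, $\nu$ a Borel measure on $Z$ with $0<\nu(Y)\le1$, and $1\le S<2Q$, $0<\tilde c_0\le\tilde C_0$ with $\tilde c_0r^S\le\nu(B_{d_Z}(u,r))\le\tilde C_0r^S$ for $u\in Y$, $0<r<\mathrm{diam}_{d_Z}(Y)$. Let $\mathcal A$ be a set of parameters; to each $a\in\mathcal A$, $u\in Y$ are associated $F_u(a)\subset I_u(a)\subset\tilde I_u(a)\subset X$ with $c\le\mathrm{diam}_{d'}I_u(a)\le c'$, $\mathrm{diam}_{d'}\tilde I_u(a)\le\bar c\,\mathrm{diam}_{d'}I_u(a)$, and a doubling measure $\mu_{u,a}$ of total mass $1$ on $F_u(a)$.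 For $0<\delta<1$, $T^\delta_u(a)=\{x:d(x,I_u(a))\le\delta\}$, $\tilde T^{W\delta}_u(a)=\{x:d(x,\tilde I_u(a))\le W\delta\}$, with $W$ from (A4). Axioms: (A1) $u\mapsto\mu(T^\delta_u(a))$ is continuous on $Y$; there are $S/2<T<Q$, $0<c_1\le c_2$ with $c_1\delta^T\le\mu(T^\delta_u(a))\le\mu(\tilde T^{W\delta}_u(a))\le c_2\delta^T$, and $\mu(A)\le c_2\,\mathrm{diam}_{d'}(A)\delta^T$ for $A\subset\tilde T^{W\delta}_u(a)$. (A2) There are $0\le\theta<\frac{2Q-2T+S}{S+2}$, $K'>0$, $K\ge1$ such that for all $a,u$, $x\in F_u(a)$, $\delta\le r\le2\delta$: if $\mu_{u,a}(F_u(a)\cap B_d(x,r))=M>0$ then $\mu(T^\delta_u(a)\cap B_d(x,Kr))\ge K'M\delta^\theta\mu(T^\delta_u(a))$. (A3) There is $b>0$ with $\mathrm{diam}_{d'}(\tilde T^{W\delta}_u(a)\cap\tilde T^{W\delta}_v(a'))\le b\delta/d_Z(u,v)$. (A4) There are $0<W,\bar N<\infty$ such that if $d_Z(u,v)\le\delta$, $a\in\mathcal A$, then $T^\delta_u(a)$ is covered by at most $\bar N$ tubes $\tilde T^{W\delta}_v(b_k)$, $b_k\in\mathcal A$. (A5) There are constants $\alpha,\lambda$ with $0\le\alpha\le\min\{Q/\theta-2,S-1\}$ (only $0\le\alpha\le S-1$ if $\theta=0$), $\max\{S-\alpha,S-2T+2\}\le\lambda<2Q-2T+S+2-2\theta(\alpha+2)$,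 and $C'>0$, such that: whenever $0<\delta,\beta,\gamma<1$, $T_j=\tilde T^{W\delta}_{u_j}(a_j)$ ($j=1,\dots,N$) with $d_Z(u_j,u_k)>\delta$ for $j\ne k$, and $T=\tilde T^{W\delta}_u(a)$ satisfies $T\cap T_j\neq\emptyset$ and $d_Z(u_j,u)\ge\beta/8$ for all $j$, then for every $j$, $\#\{i:d_Z(u_i,u_j)\le\beta,\ T_i\cap T_j\ne\emptyset,\ d'(T_i\cap T_j,T_j\cap T)\ge\gamma\}\le C'\delta^{-\lambda}\beta\gamma^{-\alpha}$, where $d'(A,B)=\inf\{d'(x,y):x\in A,y\in B\}$. An $(N,\delta)$-hairbrush is a collection of tubes $T_j=\tilde T^{W\delta}_{u_j}(a_j)$, $j=1,\dots,N$, with $d_Z(u_j,u_k)>\delta$ for $j\ne k$, for which there is a tube $T=\tilde T^{W\delta}_u(a)$ with $T\cap T_j\ne\emptyset$ for all $j$. *)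

theory Defs
  imports "HOL-Analysis.Analysis" "HOL-Probability.Probability"
begin

definition diam2 :: "('x \<Rightarrow> 'x \<Rightarrow> real) \<Rightarrow> 'x set \<Rightarrow> ennreal" where
  "diam2 d' A = (SUP x\<in>A. SUP y\<in>A. ennreal (d' x y))"

definition setdist2 :: "('x \<Rightarrow> 'x \<Rightarrow> real) \<Rightarrow> 'x set \<Rightarrow> 'x set \<Rightarrow> ennreal" where
  "setdist2 d' A B = (INF x\<in>A. INF y\<in>B. ennreal (d' x y))"

definition tube :: "('z \<Rightarrow> 'a \<Rightarrow> 'x::metric_space set) \<Rightarrow> real \<Rightarrow> 'z \<Rightarrow> 'a \<Rightarrow> 'x set" where
  "tube I \<delta> u a = {x. infdist x (I u a) \<le> \<delta>}"

definition btube :: "('z \<Rightarrow> 'a \<Rightarrow> 'x::metric_space set) \<Rightarrow> real \<Rightarrow> real \<Rightarrow> 'z \<Rightarrow> 'a \<Rightarrow> 'x set" where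
  "btube It W \<delta> u a = {x. infdist x (It u a) \<le> W * \<delta>}"

definition base_setting ::
  "'x::polish_space measure \<Rightarrow> real \<Rightarrow> real \<Rightarrow> ('x \<Rightarrow> 'x \<Rightarrow> real) \<Rightarrow>
   'z::metric_space set \<Rightarrow> 'z measure \<Rightarrow> real \<Rightarrow> real \<Rightarrow> real \<Rightarrow> bool" where
  "base_setting \<mu> Q C0 d' Y \<nu> S c0t C0t \<longleftrightarrow>
     sets \<mu> = sets borel \<and> Q > 1/2 \<and> C0 > 0 \<and>
     (\<forall>x r. 0 < r \<and> (\<exists>y z::'x. r < dist y z) \<longrightarrow> emeasure \<mu> (cball x r) \<le> ennreal (C0 * r powr Q)) \<and>
     Metric_space UNIV d' \<and> separable_space (Metric_space.mtopology UNIV d') \<and>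
     compact Y \<and> sets \<nu> = sets borel \<and> 0 < emeasure \<nu> Y \<and> emeasure \<nu> Y \<le> 1 \<and>
     1 \<le> S \<and> S < 2 * Q \<and> 0 < c0t \<and> c0t \<le> C0t \<and>
     (\<forall>u\<in>Y. \<forall>r. 0 < r \<and> (\<exists>v\<in>Y. \<exists>w\<in>Y. r < dist v w) \<longrightarrow>
        ennreal (c0t * r powr S) \<le> emeasure \<nu> (cball u r) \<and>
        emeasure \<nu> (cball u r) \<le> ennreal (C0t * r powr S))"

definition doubling_prob_on :: "'x::metric_space measure \<Rightarrow> 'x set \<Rightarrow> bool" where
  "doubling_prob_on m F \<longleftrightarrow> sets m = sets borel \<and> emeasure m (space m) = 1 \<and>
     (\<exists>N\<in>null_sets m. UNIV - F \<subseteq> N) \<and>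
     (\<exists>D. \<forall>x\<in>F. \<forall>r>0. emeasure m (cball x (2 * r)) \<le> ennreal D * emeasure m (cball x r))"

definition family_setting ::
  "('x \<Rightarrow> 'x \<Rightarrow> real) \<Rightarrow> 'z set \<Rightarrow> 'a set \<Rightarrow> ('z \<Rightarrow> 'a \<Rightarrow> 'x::metric_space set) \<Rightarrow>
   ('z \<Rightarrow> 'a \<Rightarrow> 'x set) \<Rightarrow> ('z \<Rightarrow> 'a \<Rightarrow> 'x set) \<Rightarrow> ('z \<Rightarrow> 'a \<Rightarrow> 'x measure) \<Rightarrow>
   real \<Rightarrow> real \<Rightarrow> real \<Rightarrow> bool" where
  "family_setting d' Y A F I It mu c c' cb \<longleftrightarrow> 0 < c \<and> c \<le> c' \<and>
     (\<forall>a\<in>A. \<forall>u\<in>Y. F u a \<subseteq> I u a \<and> I u a \<subseteq> It u a \<and>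
        ennreal c \<le> diam2 d' (I u a) \<and> diam2 d' (I u a) \<le> ennreal c' \<and>
        diam2 d' (It u a) \<le> ennreal cb * diam2 d' (I u a) \<and>
        doubling_prob_on (mu u a) (F u a))"

definition axiom_A1 ::
  "'x::metric_space measure \<Rightarrow> real \<Rightarrow> ('x \<Rightarrow> 'x \<Rightarrow> real) \<Rightarrow> 'z::metric_space set \<Rightarrow> 'a set \<Rightarrow>
   ('z \<Rightarrow> 'a \<Rightarrow> 'x set) \<Rightarrow> ('z \<Rightarrow> 'a \<Rightarrow> 'x set) \<Rightarrow> real \<Rightarrow> real \<Rightarrow> real \<Rightarrow> bool" where
  "axiom_A1 \<mu> Q d' Y A I It W S Tx \<longleftrightarrow>
     S / 2 < Tx \<and> Tx < Q \<and>
     (\<exists>c1 c2. 0 < c1 \<and> c1 \<le> c2 \<and>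
       (\<forall>a\<in>A. \<forall>\<delta>. 0 < \<delta> \<and> \<delta> < 1 \<longrightarrow>
          continuous_on Y (\<lambda>u. measure \<mu> (tube I \<delta> u a)) \<and>
          (\<forall>u\<in>Y. ennreal (c1 * \<delta> powr Tx) \<le> emeasure \<mu> (tube I \<delta> u a) \<and>
                  emeasure \<mu> (tube I \<delta> u a) \<le> emeasure \<mu> (btube It W \<delta> u a) \<and>
                  emeasure \<mu> (btube It W \<delta> u a) \<le> ennreal (c2 * \<delta> powr Tx) \<and>
                  (\<forall>B. B \<subseteq> btube It W \<delta> u a \<longrightarrow>
                     emeasure \<mu> B \<le> ennreal c2 * diam2 d' B * ennreal (\<delta> powr Tx)))))"

definition axiom_A2 ::
  "'x::metric_space measure \<Rightarrow> real \<Rightarrow> 'z set \<Rightarrow> 'a set \<Rightarrow> ('z \<Rightarrow> 'a \<Rightarrow> 'x set) \<Rightarrow>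
   ('z \<Rightarrow> 'a \<Rightarrow> 'x set) \<Rightarrow> ('z \<Rightarrow> 'a \<Rightarrow> 'x measure) \<Rightarrow> real \<Rightarrow> real \<Rightarrow> real \<Rightarrow> bool" where
  "axiom_A2 \<mu> Q Y A F I mu S Tx \<theta> \<longleftrightarrow>
     0 \<le> \<theta> \<and> \<theta> < (2 * Q - 2 * Tx + S) / (S + 2) \<and>
     (\<exists>K' K. K' > 0 \<and> K \<ge> 1 \<and>
       (\<forall>a\<in>A. \<forall>u\<in>Y. \<forall>x\<in>F u a. \<forall>\<delta> r. 0 < \<delta> \<and> \<delta> < 1 \<and> \<delta> \<le> r \<and> r \<le> 2 * \<delta> \<longrightarrow>
          emeasure (mu u a) (cball x r) > 0 \<longrightarrow>
          emeasure \<mu> (tube I \<delta> u a \<inter> cball x (K * r)) \<ge>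
            ennreal K' * emeasure (mu u a) (cball x r) * ennreal (\<delta> powr \<theta>)
              * emeasure \<mu> (tube I \<delta> u a)))"

definition axiom_A3 ::
  "('x \<Rightarrow> 'x \<Rightarrow> real) \<Rightarrow> 'z::metric_space set \<Rightarrow> 'a set \<Rightarrow> ('z \<Rightarrow> 'a \<Rightarrow> 'x::metric_space set) \<Rightarrow>
   real \<Rightarrow> bool" where
  "axiom_A3 d' Y A It W \<longleftrightarrow>
     (\<exists>b>0. \<forall>a\<in>A. \<forall>a'\<in>A. \<forall>u\<in>Y. \<forall>v\<in>Y. \<forall>\<delta>. 0 < \<delta> \<and> \<delta> < 1 \<and> u \<noteq> v \<longrightarrow>
        diam2 d' (btube It W \<delta> u a \<inter> btube It W \<delta> v a') \<le> ennreal (b * \<delta> / dist u v))"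

definition axiom_A4 ::
  "'z::metric_space set \<Rightarrow> 'a set \<Rightarrow> ('z \<Rightarrow> 'a \<Rightarrow> 'x::metric_space set) \<Rightarrow>
   ('z \<Rightarrow> 'a \<Rightarrow> 'x set) \<Rightarrow> real \<Rightarrow> bool" where
  "axiom_A4 Y A I It W \<longleftrightarrow> 0 < W \<and>
     (\<exists>Nbar::nat. \<forall>a\<in>A. \<forall>u\<in>Y. \<forall>v\<in>Y. \<forall>\<delta>. 0 < \<delta> \<and> \<delta> < 1 \<and> dist u v \<le> \<delta> \<longrightarrow>
        (\<exists>B. B \<subseteq> A \<and> finite B \<and> card B \<le> Nbar \<and>
             tube I \<delta> u a \<subseteq> (\<Union>b\<in>B. btube It W \<delta> v b)))"

definition axiom_A5 ::
  "real \<Rightarrow> ('x \<Rightarrow> 'x \<Rightarrow> real) \<Rightarrow> 'z::metric_space set \<Rightarrow> 'a set \<Rightarrow>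
   ('z \<Rightarrow> 'a \<Rightarrow> 'x::metric_space set) \<Rightarrow> real \<Rightarrow> real \<Rightarrow> real \<Rightarrow> real \<Rightarrow> real \<Rightarrow> real \<Rightarrow> bool" where
  "axiom_A5 Q d' Y A It W S Tx \<theta> \<alpha> lam \<longleftrightarrow>
     0 \<le> \<alpha> \<and> \<alpha> \<le> S - 1 \<and> (\<theta> \<noteq> 0 \<longrightarrow> \<alpha> \<le> Q / \<theta> - 2) \<and>
     max (S - \<alpha>) (S - 2 * Tx + 2) \<le> lam \<and>
     lam < 2 * Q - 2 * Tx + S + 2 - 2 * \<theta> * (\<alpha> + 2) \<and>
     (\<exists>C'>0. \<forall>\<delta> \<beta> \<gamma> (N::nat) (us::nat \<Rightarrow> 'z) (as::nat \<Rightarrow> 'a) u a.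
        0 < \<delta> \<and> \<delta> < 1 \<and> 0 < \<beta> \<and> \<beta> < 1 \<and> 0 < \<gamma> \<and> \<gamma> < 1 \<and>
        (\<forall>j<N. us j \<in> Y \<and> as j \<in> A) \<and> u \<in> Y \<and> a \<in> A \<and>
        (\<forall>j<N. \<forall>k<N. j \<noteq> k \<longrightarrow> dist (us j) (us k) > \<delta>) \<and>
        (\<forall>j<N. btube It W \<delta> u a \<inter> btube It W \<delta> (us j) (as j) \<noteq> {} \<and>
                dist (us j) u \<ge> \<beta> / 8) \<longrightarrow>
        (\<forall>j<N. real (card {i. i < N \<and> dist (us i) (us j) \<le> \<beta> \<and>
              btube It W \<delta> (us i) (as i) \<inter> btube It W \<delta> (us j) (as j) \<noteq> {} \<and>
              setdist2 d' (btube It W \<delta> (us i) (as i) \<inter> btube It W \<delta> (us j) (as j))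
                          (btube It W \<delta> (us j) (as j) \<inter> btube It W \<delta> u a) \<ge> ennreal \<gamma>})
           \<le> C' * \<delta> powr (- lam) * \<beta> * \<gamma> powr (- \<alpha>)))"

definition hairbrush ::
  "'z::metric_space set \<Rightarrow> 'a set \<Rightarrow> ('z \<Rightarrow> 'a \<Rightarrow> 'x::metric_space set) \<Rightarrow> real \<Rightarrow>
   nat \<Rightarrow> real \<Rightarrow> (nat \<Rightarrow> 'z) \<Rightarrow> (nat \<Rightarrow> 'a) \<Rightarrow> bool" where
  "hairbrush Y A It W N \<delta> us as \<longleftrightarrow>
     0 < \<delta> \<and> \<delta> < 1 \<and> (\<forall>j<N. us j \<in> Y \<and> as j \<in> A) \<and>
     (\<forall>j<N. \<forall>k<N. j \<noteq> k \<longrightarrow> dist (us j) (us k) > \<delta>) \<and>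
     (\<exists>u\<in>Y. \<exists>a\<in>A. \<forall>j<N. btube It W \<delta> u a \<inter> btube It W \<delta> (us j) (as j) \<noteq> {})"

end

theory Submission
  imports Defs
begin

lemma young_pt:
  fixes x t q :: real
  assumes "x \<ge> 0" "t > 0" "0 < q" "q \<le> 1"
  shows "x powr q \<le> q * t powr (q-1) * x + (1-q) * t powr q"
proof (cases "x = 0")
  case True then show ?thesis using assms by simp
next
  case False
  then have xp: "x > 0" using assms by simp
  have "(x/t) powr q * 1 powr (1-q) \<le> q*(x/t) + (1-q)*1"
    using Youngs_inequality_0[of q "1-q" "x/t" 1] assms xp by simp
  then have "(x/t) powr q \<le> q*(x/t) + (1-q)" by simp
  then have "t powr q * (x/t) powr q \<le> t powr q * (q*(x/t) + (1-q))"
    using assms by (intro mult_left_mono) auto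
  moreover have "t powr q * (x/t) powr q = x powr q"
    using assms xp by (simp add: powr_divide)
  moreover have "t powr q * (q*(x/t) + (1-q)) = q * t powr (q-1) * x + (1-q) * t powr q"
    using assms by (simp add: powr_diff field_simps)
  ultimately show ?thesis by simp
qed

lemma young_integral:
  fixes M :: "'b measure"
  assumes gm: "g \<in> borel_measurable M" and g0: "\<And>x. g x \<ge> 0"
    and U: "U \<in> sets M" and gU: "\<And>x. x \<notin> U \<Longrightarrow> g x = 0"
    and gA: "(\<integral>\<^sup>+x. ennreal (g x) \<partial>M) \<le> ennreal A"
    and UB: "emeasure M U \<le> ennreal B" and A: "A > 0" and B: "B > 0"
    and q: "0 < q" "q \<le> 1"
  shows "(\<integral>\<^sup>+x. ennreal (g x powr q) \<partial>M) \<le> ennreal (B powr (1-q) * A powr q)"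
proof -
  define t where "t = A / B"
  have t: "t > 0" using A B by (simp add: t_def)
  define c1 where "c1 = q * t powr (q-1)"
  define c2 where "c2 = (1-q) * t powr q"
  have c1: "c1 \<ge> 0" and c2: "c2 \<ge> 0" using q t by (auto simp: c1_def c2_def)
  have pt: "ennreal (g x powr q) \<le> ennreal c1 * ennreal (g x) + ennreal c2 * indicator U x" for x
  proof (cases "x \<in> U")
    case True
    have "g x powr q \<le> c1 * g x + c2"
      using young_pt[OF g0 t q] by (simp add: c1_def c2_def)
    then show ?thesis using True c1 c2 g0[of x]
      by (simp add: ennreal_mult[symmetric] ennreal_plus[symmetric] del: ennreal_plus)
  next
    case False then show ?thesis using gU[of x] q by simp
  qed
  have "(\<integral>\<^sup>+x. ennreal (g x powr q) \<partial>M) \<le> (\<integral>\<^sup>+x. ennreal c1 * ennreal (g x) + ennreal c2 * indicator U x \<partial>M)"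
    by (intro nn_integral_mono pt)
  also have "\<dots> = ennreal c1 * (\<integral>\<^sup>+x. ennreal (g x) \<partial>M) + ennreal c2 * emeasure M U"
    using gm U by (simp add: nn_integral_add nn_integral_cmult)
  also have "\<dots> \<le> ennreal c1 * ennreal A + ennreal c2 * ennreal B"
    by (intro add_mono mult_left_mono gA UB) auto
  also have "\<dots> = ennreal (c1 * A + c2 * B)"
    using c1 c2 A B by (simp add: ennreal_mult[symmetric] ennreal_plus[symmetric] del: ennreal_plus)
  also have "c1 * A + c2 * B = B powr (1-q) * A powr q"
  proof -
    have "c1 * A = q * (A powr q * B powr (1-q))"
      using A B q by (simp add: c1_def t_def powr_divide powr_diff field_simps)
    moreover have "c2 * B = (1-q) * (A powr q * B powr (1-q))"
      using A B q by (simp add: c2_def t_def powr_divide powr_diff field_simps)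
    ultimately show ?thesis by (simp add: algebra_simps)
  qed
  finally show ?thesis .
qed


lemma diam2_le:
  assumes "\<And>x y. x \<in> B \<Longrightarrow> y \<in> B \<Longrightarrow> d' x y \<le> r"
  shows "diam2 d' B \<le> ennreal r"
  unfolding diam2_def using assms by (intro SUP_least) (simp add: ennreal_leI)

lemma le_diam2: "x \<in> B \<Longrightarrow> y \<in> B \<Longrightarrow> ennreal (d' x y) \<le> diam2 d' B"
  unfolding diam2_def by (intro SUP_upper2[of x] SUP_upper2[of y]) auto

lemma dist_le_of_diam2:
  assumes "x \<in> B" "y \<in> B" "diam2 d' B \<le> ennreal r" "r \<ge> 0"
  shows "d' x y \<le> r"
proof -
  have "ennreal (d' x y) \<le> ennreal r" using le_diam2[OF assms(1,2), of d'] assms(3) by simp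
  then show ?thesis using assms(4) by (simp add: ennreal_le_iff)
qed

lemma setdist2_lessD:
  assumes "setdist2 d' P Q < ennreal g"
  shows "\<exists>x\<in>P. \<exists>y\<in>Q. d' x y < g"
proof -
  from assms obtain x where x: "x \<in> P" "(INF y\<in>Q. ennreal (d' x y)) < ennreal g"
    unfolding setdist2_def by (auto simp: INF_less_iff)
  then obtain y where "y \<in> Q" "ennreal (d' x y) < ennreal g" by (auto simp: INF_less_iff)
  moreover have "d' x y < g"
  proof (cases "0 \<le> d' x y")
    case True then show ?thesis using \<open>ennreal (d' x y) < ennreal g\<close> by (simp add: ennreal_less_iff)
  next
    case False
    have "0 < g" using \<open>ennreal (d' x y) < ennreal g\<close>
      by (metis ennreal_eq_0_iff ennreal_less_zero_iff not_less_zero not_less)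
    then show ?thesis using False by simp
  qed
  ultimately show ?thesis using x by blast
qed

lemma closed_btube: "closed (btube It W \<delta> u a)"
  unfolding btube_def by (intro closed_Collect_le continuous_on_infdist) (auto intro: continuous_intros)


locale hbl =
  fixes \<mu> :: "'x::polish_space measure" and d' :: "'x \<Rightarrow> 'x \<Rightarrow> real"
    and Y :: "'z::metric_space set" and \<nu> :: "'z measure" and A :: "'a set"
    and It :: "'z \<Rightarrow> 'a \<Rightarrow> 'x set"
    and W S Tx \<alpha> lam c2 b C' c0t C0t q :: real
  assumes sets_mu: "sets \<mu> = sets borel" and metric: "Metric_space UNIV d'"
    and Ycomp: "compact Y" and sets_nu: "sets \<nu> = sets borel"
    and c2: "c2 > 0"
    and A1a: "\<forall>a\<in>A. \<forall>\<delta>. 0 < \<delta> \<and> \<delta> < 1 \<longrightarrow> (\<forall>u\<in>Y.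
          emeasure \<mu> (btube It W \<delta> u a) \<le> ennreal (c2 * \<delta> powr Tx) \<and>
          (\<forall>B. B \<subseteq> btube It W \<delta> u a \<longrightarrow>
                     emeasure \<mu> B \<le> ennreal c2 * diam2 d' B * ennreal (\<delta> powr Tx)))"
    and b: "b > 0"
    and A3: "\<forall>a\<in>A. \<forall>a'\<in>A. \<forall>u\<in>Y. \<forall>v\<in>Y. \<forall>\<delta>. 0 < \<delta> \<and> \<delta> < 1 \<and> u \<noteq> v \<longrightarrow>
        diam2 d' (btube It W \<delta> u a \<inter> btube It W \<delta> v a') \<le> ennreal (b * \<delta> / dist u v)"
    and C': "C' > 0"
    and A5: "\<forall>\<delta> \<beta> \<gamma> (N::nat) (us::nat \<Rightarrow> 'z) (as::nat \<Rightarrow> 'a) u a.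
        0 < \<delta> \<and> \<delta> < 1 \<and> 0 < \<beta> \<and> \<beta> < 1 \<and> 0 < \<gamma> \<and> \<gamma> < 1 \<and>
        (\<forall>j<N. us j \<in> Y \<and> as j \<in> A) \<and> u \<in> Y \<and> a \<in> A \<and>
        (\<forall>j<N. \<forall>k<N. j \<noteq> k \<longrightarrow> dist (us j) (us k) > \<delta>) \<and>
        (\<forall>j<N. btube It W \<delta> u a \<inter> btube It W \<delta> (us j) (as j) \<noteq> {} \<and>
                dist (us j) u \<ge> \<beta> / 8) \<longrightarrow>
        (\<forall>j<N. real (card {i. i < N \<and> dist (us i) (us j) \<le> \<beta> \<and>
              btube It W \<delta> (us i) (as i) \<inter> btube It W \<delta> (us j) (as j) \<noteq> {} \<and>
              setdist2 d' (btube It W \<delta> (us i) (as i) \<inter> btube It W \<delta> (us j) (as j))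
                          (btube It W \<delta> (us j) (as j) \<inter> btube It W \<delta> u a) \<ge> ennreal \<gamma>})
           \<le> C' * \<delta> powr (- lam) * \<beta> * \<gamma> powr (- \<alpha>))"
    and nu: "0 < c0t" "c0t \<le> C0t"
    and nuball: "\<forall>u\<in>Y. \<forall>r. 0 < r \<and> (\<exists>v\<in>Y. \<exists>w\<in>Y. r < dist v w) \<longrightarrow>
        ennreal (c0t * r powr S) \<le> emeasure \<nu> (cball u r) \<and>
        emeasure \<nu> (cball u r) \<le> ennreal (C0t * r powr S)"
    and S: "1 \<le> S" and alpha: "0 \<le> \<alpha>" "\<alpha> \<le> S - 1" and lam: "S - \<alpha> \<le> lam"
    and q: "1/(\<alpha>+1) \<le> q" "q \<le> 1"
begin

abbreviation "TB \<equiv> btube It W"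

lemma q_pos: "q > 0"
  using q alpha by (smt (verit) divide_pos_pos)

lemma dtri: "d' x z \<le> d' x y + d' y z"
  using Metric_space.triangle[OF metric] by auto
lemma dcomm: "d' x y = d' y x"
  using Metric_space.commute[OF metric] by auto
lemma dnn: "0 \<le> d' x y"
  using Metric_space.nonneg[OF metric] by auto

lemma TB_sets[measurable]: "TB \<delta> u a \<in> sets \<mu>"
  using closed_btube[of It W \<delta> u a] sets_mu by (simp add: borel_closed)

lemma mu_TB: "a \<in> A \<Longrightarrow> u \<in> Y \<Longrightarrow> 0 < \<delta> \<Longrightarrow> \<delta> < 1 \<Longrightarrow> emeasure \<mu> (TB \<delta> u a) \<le> ennreal (c2 * \<delta> powr Tx)"
  using A1a by blast

lemma mu_sub: "a \<in> A \<Longrightarrow> u \<in> Y \<Longrightarrow> 0 < \<delta> \<Longrightarrow> \<delta> < 1 \<Longrightarrow> B \<subseteq> TB \<delta> u a \<Longrightarrow> r \<ge> 0 \<Longrightarrow>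
   diam2 d' B \<le> ennreal r \<Longrightarrow> emeasure \<mu> B \<le> ennreal (c2 * r * \<delta> powr Tx)"
proof -
  assume as: "a \<in> A" "u \<in> Y" "0 < \<delta>" "\<delta> < 1" "B \<subseteq> TB \<delta> u a" "r \<ge> 0" "diam2 d' B \<le> ennreal r"
  then have "emeasure \<mu> B \<le> ennreal c2 * diam2 d' B * ennreal (\<delta> powr Tx)" using A1a by blast
  also have "\<dots> \<le> ennreal c2 * ennreal r * ennreal (\<delta> powr Tx)"
    using as by (intro mult_right_mono mult_left_mono) auto
  also have "\<dots> = ennreal (c2 * r * \<delta> powr Tx)"
    using c2 as by (simp add: ennreal_mult)
  finally show ?thesis .
qed

lemma mu_int:
  assumes "a \<in> A" "a' \<in> A" "u \<in> Y" "v \<in> Y" "0 < \<delta>" "\<delta> < 1" "u \<noteq> v"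
  shows "emeasure \<mu> (TB \<delta> u a \<inter> TB \<delta> v a') \<le> ennreal (c2 * (b * \<delta> / dist u v) * \<delta> powr Tx)"
  using assms A3 b by (intro mu_sub[of a u]) auto

lemma A5_set:
  fixes J :: "nat set"
  assumes J: "finite J" and j: "j \<in> J"
    and d: "0 < \<delta>" "\<delta> < 1" and be: "0 < \<beta>" "\<beta> < 1" and ga: "0 < \<gamma>" "\<gamma> < 1"
    and Ju: "\<forall>i\<in>J. us i \<in> Y \<and> as i \<in> A" and ua: "u \<in> Y" "a \<in> A"
    and sep: "\<forall>i\<in>J. \<forall>k\<in>J. i \<noteq> k \<longrightarrow> dist (us i) (us k) > \<delta>"
    and meet: "\<forall>i\<in>J. TB \<delta> u a \<inter> TB \<delta> (us i) (as i) \<noteq> {} \<and> dist (us i) u \<ge> \<beta> / 8"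
  shows "real (card {i\<in>J. dist (us i) (us j) \<le> \<beta> \<and>
              TB \<delta> (us i) (as i) \<inter> TB \<delta> (us j) (as j) \<noteq> {} \<and>
              setdist2 d' (TB \<delta> (us i) (as i) \<inter> TB \<delta> (us j) (as j))
                          (TB \<delta> (us j) (as j) \<inter> TB \<delta> u a) \<ge> ennreal \<gamma>})
           \<le> C' * \<delta> powr (- lam) * \<beta> * \<gamma> powr (- \<alpha>)"
proof -
  obtain h where h: "bij_betw h {0..<card J} J" using ex_bij_betw_nat_finite[OF J] by blast
  define n where "n = card J"
  have "j \<in> h ` {0..<n}" using h j unfolding n_def bij_betw_def by simp
  then obtain j' where j': "j' < n" "h j' = j" by auto
  have hJ: "i < n \<Longrightarrow> h i \<in> J" for i using h unfolding n_def bij_betw_def by auto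
  have hinj: "i < n \<Longrightarrow> k < n \<Longrightarrow> i \<noteq> k \<Longrightarrow> h i \<noteq> h k" for i k
    using h unfolding n_def bij_betw_def inj_on_def by auto
  let ?P = "\<lambda>i. dist (us i) (us j) \<le> \<beta> \<and>
              TB \<delta> (us i) (as i) \<inter> TB \<delta> (us j) (as j) \<noteq> {} \<and>
              setdist2 d' (TB \<delta> (us i) (as i) \<inter> TB \<delta> (us j) (as j))
                          (TB \<delta> (us j) (as j) \<inter> TB \<delta> u a) \<ge> ennreal \<gamma>"
  have A5': "real (card {i. i < n \<and> ?P (h i)}) \<le> C' * \<delta> powr (- lam) * \<beta> * \<gamma> powr (- \<alpha>)"
  proof -
    have pre: "(\<forall>i<n. (us \<circ> h) i \<in> Y \<and> (as \<circ> h) i \<in> A) \<and>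
        (\<forall>i<n. \<forall>k<n. i \<noteq> k \<longrightarrow> dist ((us \<circ> h) i) ((us \<circ> h) k) > \<delta>) \<and>
        (\<forall>i<n. TB \<delta> u a \<inter> TB \<delta> ((us \<circ> h) i) ((as \<circ> h) i) \<noteq> {} \<and>
                dist ((us \<circ> h) i) u \<ge> \<beta> / 8)"
      using Ju sep meet hJ hinj by auto
    have "\<forall>j<n. real (card {i. i < n \<and> dist ((us \<circ> h) i) ((us \<circ> h) j) \<le> \<beta> \<and>
              TB \<delta> ((us \<circ> h) i) ((as \<circ> h) i) \<inter> TB \<delta> ((us \<circ> h) j) ((as \<circ> h) j) \<noteq> {} \<and>
              setdist2 d' (TB \<delta> ((us \<circ> h) i) ((as \<circ> h) i) \<inter> TB \<delta> ((us \<circ> h) j) ((as \<circ> h) j))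
                          (TB \<delta> ((us \<circ> h) j) ((as \<circ> h) j) \<inter> TB \<delta> u a) \<ge> ennreal \<gamma>})
           \<le> C' * \<delta> powr (- lam) * \<beta> * \<gamma> powr (- \<alpha>)"
      using A5[rule_format, of \<delta> \<beta> \<gamma> n "us \<circ> h" "as \<circ> h" u a] d be ga ua pre by fast
    from this[rule_format, OF j'(1)] show ?thesis using j'(2) by (simp add: comp_def)
  qed
  have "{i\<in>J. ?P i} = h ` {i. i < n \<and> ?P (h i)}"
  proof
    show "{i\<in>J. ?P i} \<subseteq> h ` {i. i < n \<and> ?P (h i)}"
    proof
      fix i assume "i \<in> {i\<in>J. ?P i}"
      then have Pi: "?P i" and "i \<in> h ` {0..<n}" using h unfolding n_def bij_betw_def by auto
      then obtain k where k: "k \<in> {0..<n}" "i = h k" by blast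
      then have "k < n" "h k = i" by auto
      then show "i \<in> h ` {i. i < n \<and> ?P (h i)}" using Pi by blast
    qed
  qed (use hJ in auto)
  moreover have "inj_on h {i. i < n \<and> ?P (h i)}"
    using h unfolding n_def bij_betw_def inj_on_def by auto
  ultimately have "card {i\<in>J. ?P i} = card {i. i < n \<and> ?P (h i)}"
    by (simp add: card_image)
  then show ?thesis using A5' by simp
qed

end

context hbl begin

lemma nu_lo: "u \<in> Y \<Longrightarrow> 0 < r \<Longrightarrow> v \<in> Y \<Longrightarrow> w \<in> Y \<Longrightarrow> r < dist v w \<Longrightarrow>
   ennreal (c0t * r powr S) \<le> emeasure \<nu> (cball u r)"
proof -
  assume as: "u \<in> Y" "0 < r" "v \<in> Y" "w \<in> Y" "r < dist v w"
  then have "0 < r \<and> (\<exists>v\<in>Y. \<exists>w\<in>Y. r < dist v w)" by blast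
  from nuball[rule_format, OF as(1) this] show ?thesis by (rule conjunct1)
qed

lemma nu_up: "u \<in> Y \<Longrightarrow> 0 < r \<Longrightarrow> v \<in> Y \<Longrightarrow> w \<in> Y \<Longrightarrow> r < dist v w \<Longrightarrow>
   emeasure \<nu> (cball u r) \<le> ennreal (C0t * r powr S)"
proof -
  assume as: "u \<in> Y" "0 < r" "v \<in> Y" "w \<in> Y" "r < dist v w"
  then have "0 < r \<and> (\<exists>v\<in>Y. \<exists>w\<in>Y. r < dist v w)" by blast
  from nuball[rule_format, OF as(1) this] show ?thesis by (rule conjunct2)
qed

lemma count_nu:
  fixes J :: "nat set" and us :: "nat \<Rightarrow> 'z"
  assumes v0: "v0 \<in> Y" "w0 \<in> Y" and d: "\<delta> > 0" and bd: "\<delta> \<le> \<beta>" and bD: "\<beta> + \<delta>/2 < dist v0 w0"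
    and J: "finite J" and Ju: "\<forall>i\<in>J. us i \<in> Y"
    and sep: "\<forall>i\<in>J. \<forall>k\<in>J. i \<noteq> k \<longrightarrow> dist (us i) (us k) > \<delta>" and z: "z \<in> Y"
  shows "real (card {i\<in>J. dist (us i) z \<le> \<beta>}) \<le> (C0t/c0t) * 3 powr S * (\<beta>/\<delta>) powr S"
proof -
  define H where "H = {i\<in>J. dist (us i) z \<le> \<beta>}"
  have H: "finite H" "H \<subseteq> J" using J unfolding H_def by auto
  define B where "B i = cball (us i) (\<delta>/2)" for i
  have Bs: "B ` H \<subseteq> sets \<nu>" unfolding B_def sets_nu by (auto intro: borel_closed)
  have disj: "disjoint_family_on B H"
    unfolding disjoint_family_on_def
  proof (intro ballI impI)
    fix i k assume ik: "i \<in> H" "k \<in> H" "i \<noteq> k"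
    show "B i \<inter> B k = {}"
    proof (rule ccontr)
      assume "B i \<inter> B k \<noteq> {}"
      then obtain x where "dist (us i) x \<le> \<delta>/2" "dist (us k) x \<le> \<delta>/2" by (auto simp: B_def)
      then have "dist (us i) (us k) \<le> \<delta>" using dist_triangle[of "us i" "us k" x] dist_commute[of x "us k"] by linarith
      moreover have "dist (us i) (us k) > \<delta>" using sep ik H by blast
      ultimately show False by simp
    qed
  qed
  have lowB: "ennreal (c0t * (\<delta>/2) powr S) \<le> emeasure \<nu> (B i)" if "i \<in> H" for i
  proof -
    have "us i \<in> Y" using that H Ju by auto
    moreover have "\<delta>/2 < dist v0 w0" using bD bd d by linarith
    ultimately show ?thesis using nu_lo[of "us i" "\<delta>/2" v0 w0] d v0 by (simp add: B_def)
  qed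
  have "of_nat (card H) * ennreal (c0t * (\<delta>/2) powr S) = (\<Sum>i\<in>H. ennreal (c0t * (\<delta>/2) powr S))"
    by simp
  also have "\<dots> \<le> (\<Sum>i\<in>H. emeasure \<nu> (B i))" by (intro sum_mono lowB)
  also have "\<dots> = emeasure \<nu> (\<Union>i\<in>H. B i)" using sum_emeasure[OF Bs disj H(1)] .
  also have "\<dots> \<le> emeasure \<nu> (cball z (\<beta> + \<delta>/2))"
  proof (rule emeasure_mono)
    show "(\<Union>i\<in>H. B i) \<subseteq> cball z (\<beta> + \<delta>/2)"
    proof
      fix x assume "x \<in> (\<Union>i\<in>H. B i)"
      then obtain i where "i \<in> H" "dist (us i) x \<le> \<delta>/2" by (auto simp: B_def)
      then have "dist (us i) z \<le> \<beta>" "dist (us i) x \<le> \<delta>/2" by (auto simp: H_def)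
      then have "dist z x \<le> \<beta> + \<delta>/2" using dist_triangle[of z x "us i"] dist_commute[of z "us i"] by linarith
      then show "x \<in> cball z (\<beta> + \<delta>/2)" by simp
    qed
    show "cball z (\<beta> + \<delta> / 2) \<in> sets \<nu>" unfolding sets_nu by (auto intro: borel_closed)
  qed
  also have "\<dots> \<le> ennreal (C0t * (\<beta> + \<delta>/2) powr S)"
    using nu_up[of z "\<beta> + \<delta>/2" v0 w0] z v0 bD d bd by simp
  finally have "ennreal (real (card H) * (c0t * (\<delta>/2) powr S)) \<le> ennreal (C0t * (\<beta> + \<delta>/2) powr S)"
    using nu d by (simp add: ennreal_mult ennreal_of_nat_eq_real_of_nat)
  then have le1: "real (card H) * (c0t * (\<delta>/2) powr S) \<le> C0t * (\<beta> + \<delta>/2) powr S"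
    using nu d bd by (subst (asm) ennreal_le_iff) (auto intro!: mult_nonneg_nonneg)
  have "C0t * (\<beta> + \<delta>/2) powr S \<le> C0t * (3*\<beta>/2) powr S"
    using nu d bd S by (intro mult_left_mono powr_mono2) auto
  also have "\<dots> = (C0t/c0t) * 3 powr S * (\<beta>/\<delta>) powr S * (c0t * (\<delta>/2) powr S)"
  proof -
    have "(3*\<beta>/2) powr S = 3 powr S * (\<beta>/\<delta>) powr S * (\<delta>/2) powr S"
    proof -
      have "3*\<beta>/2 = (3 * (\<beta>/\<delta>)) * (\<delta>/2)" using d by (simp add: field_simps)
      then have "(3*\<beta>/2) powr S = (3 * (\<beta>/\<delta>)) powr S * (\<delta>/2) powr S"
        using d bd by (simp only: powr_mult)
      also have "\<dots> = 3 powr S * (\<beta>/\<delta>) powr S * (\<delta>/2) powr S"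
        using d bd using powr_mult[of 3 "\<beta>/\<delta>" S] by (simp add: mult.assoc)
      finally show ?thesis .
    qed
    then show ?thesis using nu by (simp add: field_simps)
  qed
  finally have "real (card H) * (c0t * (\<delta>/2) powr S) \<le> (C0t/c0t) * 3 powr S * (\<beta>/\<delta>) powr S * (c0t * (\<delta>/2) powr S)"
    using le1 by linarith
  moreover have "c0t * (\<delta>/2) powr S > 0" using nu d by simp
  ultimately show ?thesis unfolding H_def by (rule mult_right_le_imp_le)
qed

end

lemma mid_real:
  fixes K1 K2 g \<delta> q \<alpha> lam Tx :: real
  assumes K: "K1 > 0" "K2 > 0" and d: "0 < \<delta>" "\<delta> \<le> g" and q: "0 < q" "q \<le> 1" "q * (1 + \<alpha>) \<ge> 1"
  shows "(K1*g*\<delta> powr Tx) powr (1-q) * (K2 * \<delta> powr (-lam) * g powr (-\<alpha>) * \<delta> * \<delta> powr Tx) powr q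
     \<le> K1 powr (1-q) * K2 powr q * \<delta> powr Tx * \<delta> powr (1 - q*(lam+\<alpha>))"
proof -
  have g: "g > 0" using d by linarith
  have "ln \<delta> \<le> ln g" using d g by simp
  moreover have "1 - q - q*\<alpha> \<le> 0" using q by (simp add: algebra_simps)
  ultimately have key: "(1 - q - q*\<alpha>) * (ln g - ln \<delta>) \<le> 0"
    by (intro mult_nonpos_nonneg) auto
  have L: "(K1*g*\<delta> powr Tx) powr (1-q) * (K2 * \<delta> powr (-lam) * g powr (-\<alpha>) * \<delta> * \<delta> powr Tx) powr q
     = exp ((1-q) * (ln K1 + ln g + Tx * ln \<delta>) + q * (ln K2 - lam * ln \<delta> - \<alpha> * ln g + ln \<delta> + Tx * ln \<delta>))"
    using K d g by (simp add: powr_def ln_mult exp_add)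
  have R: "K1 powr (1-q) * K2 powr q * \<delta> powr Tx * \<delta> powr (1 - q*(lam+\<alpha>))
     = exp ((1-q) * ln K1 + q * ln K2 + Tx * ln \<delta> + (1 - q*(lam+\<alpha>)) * ln \<delta>)"
    using K d by (simp add: powr_def exp_add)
  have "(1-q) * (ln K1 + ln g + Tx * ln \<delta>) + q * (ln K2 - lam * ln \<delta> - \<alpha> * ln g + ln \<delta> + Tx * ln \<delta>)
      = (1-q) * ln K1 + q * ln K2 + Tx * ln \<delta> + (1 - q*(lam+\<alpha>)) * ln \<delta> + (1 - q - q*\<alpha>) * (ln g - ln \<delta>)"
    by (simp add: algebra_simps)
  then show ?thesis unfolding L R using key by simp
qed

lemma small_real:
  fixes K1 K3 \<beta> \<delta> q S lam \<alpha> Tx :: real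
  assumes K: "K1 > 0" "K3 > 0" and d: "0 < \<delta>" "\<delta> \<le> \<beta>" "\<beta> \<le> 1" and q: "0 < q" "q \<le> 1" "q * S \<ge> 1"
    and SL: "S \<le> lam + \<alpha>"
  shows "(K1*(\<delta>/\<beta>)*\<delta> powr Tx) powr (1-q) * (K3 * (\<beta>/\<delta>) powr S * (\<delta>/\<beta>) * \<delta> powr Tx) powr q
     \<le> K1 powr (1-q) * K3 powr q * \<delta> powr Tx * \<delta> powr (1 - q*(lam+\<alpha>))"
proof -
  have b: "\<beta> > 0" using d by linarith
  have lb: "ln \<beta> \<le> 0" using b d by simp
  have ld: "ln \<delta> \<le> 0" using d by simp
  have k1: "(q*S - 1) * ln \<beta> \<le> 0" using q lb by (intro mult_nonneg_nonpos) auto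
  have k2: "(q*(lam+\<alpha>) - q*S) * ln \<delta> \<le> 0" using q ld SL by (intro mult_nonneg_nonpos) auto
  have L: "(K1*(\<delta>/\<beta>)*\<delta> powr Tx) powr (1-q) * (K3 * (\<beta>/\<delta>) powr S * (\<delta>/\<beta>) * \<delta> powr Tx) powr q
     = exp ((1-q) * (ln K1 + ln \<delta> - ln \<beta> + Tx * ln \<delta>) + q * (ln K3 + S * (ln \<beta> - ln \<delta>) + ln \<delta> - ln \<beta> + Tx * ln \<delta>))"
    using K d b by (simp add: powr_def ln_mult ln_div flip: exp_add, simp add: algebra_simps)
  have R: "K1 powr (1-q) * K3 powr q * \<delta> powr Tx * \<delta> powr (1 - q*(lam+\<alpha>))
     = exp ((1-q) * ln K1 + q * ln K3 + Tx * ln \<delta> + (1 - q*(lam+\<alpha>)) * ln \<delta>)"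
    using K d by (simp add: powr_def exp_add)
  have "(1-q) * (ln K1 + ln \<delta> - ln \<beta> + Tx * ln \<delta>) + q * (ln K3 + S * (ln \<beta> - ln \<delta>) + ln \<delta> - ln \<beta> + Tx * ln \<delta>)
      = (1-q) * ln K1 + q * ln K3 + Tx * ln \<delta> + (1 - q*(lam+\<alpha>)) * ln \<delta> + (q*S - 1) * ln \<beta> + (q*(lam+\<alpha>) - q*S) * ln \<delta>"
    by (simp add: algebra_simps)
  then show ?thesis unfolding L R using k1 k2 by simp
qed


locale cls = hbl +
  fixes \<delta> :: real and us and as and u and a
    and J :: "nat set" and R :: real and v0 w0
  assumes d: "0 < \<delta>" "\<delta> \<le> 1/2"
    and J: "finite J" and Ju: "\<forall>i\<in>J. us i \<in> Y \<and> as i \<in> A" and ua: "u \<in> Y" "a \<in> A"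
    and sep: "\<forall>i\<in>J. \<forall>k\<in>J. i \<noteq> k \<longrightarrow> dist (us i) (us k) > \<delta>"
    and meet: "\<forall>i\<in>J. TB \<delta> u a \<inter> TB \<delta> (us i) (as i) \<noteq> {}"
    and R: "0 < R" "R < 1" and Rdiam: "\<forall>i\<in>J. \<forall>k\<in>J. dist (us i) (us k) \<le> R"
    and Rrho: "\<forall>i\<in>J. dist (us i) u \<ge> R/8"
    and v0: "v0 \<in> Y" "w0 \<in> Y" "R + \<delta>/2 < dist v0 w0"
begin

abbreviation "T i \<equiv> TB \<delta> (us i) (as i)"
abbreviation "T0 \<equiv> TB \<delta> u a"
abbreviation "gam i j \<equiv> setdist2 d' (T i \<inter> T j) (T j \<inter> T0)"
abbreviation "fG G x \<equiv> (\<Sum>i\<in>G. indicator (T i) x :: real)"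

lemma dlt: "\<delta> < 1" using d by simp

lemma diam_ij: "i \<in> J \<Longrightarrow> j \<in> J \<Longrightarrow> i \<noteq> j \<Longrightarrow> diam2 d' (T i \<inter> T j) \<le> ennreal (b*\<delta>/dist (us i) (us j))"
proof -
  assume as: "i \<in> J" "j \<in> J" "i \<noteq> j"
  then have "us i \<noteq> us j" using sep d by fastforce
  then show ?thesis using A3 as Ju d dlt by blast
qed

lemma diam_j0: "j \<in> J \<Longrightarrow> diam2 d' (T j \<inter> T0) \<le> ennreal (8*b*\<delta>/R)"
proof -
  assume j: "j \<in> J"
  have rho: "dist (us j) u \<ge> R/8" using Rrho j by blast
  then have "us j \<noteq> u" using R by auto
  then have "diam2 d' (T j \<inter> T0) \<le> ennreal (b*\<delta>/dist (us j) u)" using A3 j Ju ua d dlt by blast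
  also have "b*\<delta>/dist (us j) u \<le> 8*b*\<delta>/R"
  proof -
    have "b*\<delta>/dist (us j) u \<le> b*\<delta>/(R/8)"
      using rho R b d by (intro divide_left_mono) (auto intro!: mult_pos_pos)
    then show ?thesis by (simp add: mult.commute mult.left_commute)
  qed
  finally show ?thesis by (simp add: ennreal_leI)
qed

lemma geo:
  assumes j: "j \<in> J" and G: "G \<subseteq> J - {j}" and be: "0 < \<beta>" "\<beta> \<le> R" and h: "h > 0"
    and Gp: "\<forall>i\<in>G. \<beta>/2 < dist (us i) (us j) \<and> gam i j < ennreal h"
  shows "diam2 d' (T j \<inter> (\<Union>i\<in>G. T i)) \<le> ennreal (2*h + 20*b*\<delta>/\<beta>)"
proof -
  obtain z0 where z0: "z0 \<in> T j \<inter> T0" using meet j by blast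
  have e2: "8*b*\<delta>/R \<le> 8*b*\<delta>/\<beta>" using be b d by (intro divide_left_mono) auto
  have near: "d' x z0 \<le> 2*b*\<delta>/\<beta> + h + 8*b*\<delta>/\<beta>" if x: "x \<in> T j" "i \<in> G" "x \<in> T i" for x i
  proof -
    have i: "i \<in> J" "i \<noteq> j" using G x by auto
    have di: "dist (us i) (us j) > \<beta>/2" using Gp x by blast
    obtain a1 b1 where ab: "a1 \<in> T i \<inter> T j" "b1 \<in> T j \<inter> T0" "d' a1 b1 < h"
      using setdist2_lessD[of d' "T i \<inter> T j" "T j \<inter> T0" h] Gp x by blast
    have "b*\<delta>/dist (us i) (us j) \<le> b*\<delta>/(\<beta>/2)"
      using di be b d by (intro divide_left_mono) (auto intro!: mult_pos_pos)
    then have e1: "b*\<delta>/dist (us i) (us j) \<le> 2*b*\<delta>/\<beta>" by (simp add: mult.commute mult.left_commute)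
    have "d' x a1 \<le> b*\<delta>/dist (us i) (us j)"
      using dist_le_of_diam2[OF _ _ diam_ij[OF i(1) j i(2)]] x ab b d di be by (auto intro!: divide_nonneg_nonneg)
    moreover have "d' b1 z0 \<le> 8*b*\<delta>/R"
      using dist_le_of_diam2[OF _ _ diam_j0[OF j]] z0 ab b d R by auto
    moreover have "d' x z0 \<le> d' x a1 + d' a1 b1 + d' b1 z0"
      using dtri[where x=x and y=a1 and z=z0] dtri[where x=a1 and y=b1 and z=z0] by linarith
    ultimately show ?thesis using e1 e2 ab by linarith
  qed
  show ?thesis
  proof (rule diam2_le)
    fix x y assume xy: "x \<in> T j \<inter> (\<Union>i\<in>G. T i)" "y \<in> T j \<inter> (\<Union>i\<in>G. T i)"
    then obtain i k where "i \<in> G" "x \<in> T i" "k \<in> G" "y \<in> T k" by auto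
    then have "d' x z0 \<le> 2*b*\<delta>/\<beta> + h + 8*b*\<delta>/\<beta>" "d' y z0 \<le> 2*b*\<delta>/\<beta> + h + 8*b*\<delta>/\<beta>"
      using near xy by auto
    moreover have "d' x y \<le> d' x z0 + d' z0 y" by (rule dtri[where y=z0])
    moreover have "d' z0 y = d' y z0" by (rule dcomm)
    moreover have "2*(2*b*\<delta>/\<beta> + h + 8*b*\<delta>/\<beta>) = 2*h + 20*b*\<delta>/\<beta>" by (simp add: field_simps)
    ultimately show "d' x y \<le> 2*h + 20*b*\<delta>/\<beta>" by linarith
  qed
qed

end

lemma sum_const_ennreal: "K \<ge> 0 \<Longrightarrow> (\<Sum>i\<in>G. ennreal K) = ennreal (real (card G) * K)"
  by (simp add: ennreal_mult ennreal_of_nat_eq_real_of_nat)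

context cls begin

lemma T_sets[measurable]: "T i \<in> sets \<mu>" by (rule TB_sets)

lemma grp_bound:
  assumes j: "j \<in> J" and G: "G \<subseteq> J - {j}" and be: "\<beta> > 0"
    and far: "\<forall>i\<in>G. \<beta>/2 < dist (us i) (us j)"
    and UM: "emeasure \<mu> (T j \<inter> (\<Union>i\<in>G. T i)) \<le> ennreal Mv" and Mv: "Mv > 0"
    and cG: "real (card G) \<le> Cnt" and Cnt: "Cnt > 0"
  shows "(\<integral>\<^sup>+x. ennreal ((indicator (T j) x * fG G x) powr q) \<partial>\<mu>)
     \<le> ennreal (Mv powr (1-q) * (Cnt * (c2*(2*b*\<delta>/\<beta>)*\<delta> powr Tx)) powr q)"
proof (rule young_integral)
  have Gf: "finite G" using G J finite_subset by blast
  show "(\<lambda>x. indicator (T j) x * fG G x) \<in> borel_measurable \<mu>" by measurable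
  show "\<And>x. 0 \<le> indicator (T j) x * fG G x" by (simp add: sum_nonneg)
  show "T j \<inter> (\<Union>i\<in>G. T i) \<in> sets \<mu>" using Gf by measurable
  show "\<And>x. x \<notin> T j \<inter> (\<Union>i\<in>G. T i) \<Longrightarrow> indicator (T j) x * fG G x = 0"
    by (auto simp: indicator_def)
  show "emeasure \<mu> (T j \<inter> (\<Union>i\<in>G. T i)) \<le> ennreal Mv" by (rule UM)
  show "0 < Mv" by (rule Mv)
  show "0 < q" by (rule q_pos)
  show "q \<le> 1" using q by simp
  have c1: "c2*(2*b*\<delta>/\<beta>)*\<delta> powr Tx > 0" using c2 b d be by simp
  then show "0 < Cnt * (c2*(2*b*\<delta>/\<beta>)*\<delta> powr Tx)" using Cnt mult_pos_pos by blast
  have pt: "ennreal (indicator (T j) x * fG G x) = (\<Sum>i\<in>G. indicator (T i \<inter> T j) x)" for x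
  proof -
    have "indicator (T j) x * fG G x = (\<Sum>i\<in>G. indicator (T i \<inter> T j) x :: real)"
      by (simp add: sum_distrib_left indicator_inter_arith mult.commute)
    then show ?thesis by (simp add: ennreal_indicator[symmetric])
  qed
  have "(\<integral>\<^sup>+x. ennreal (indicator (T j) x * fG G x) \<partial>\<mu>) = (\<Sum>i\<in>G. emeasure \<mu> (T i \<inter> T j))"
    unfolding pt by (subst nn_integral_sum) auto
  also have "\<dots> \<le> (\<Sum>i\<in>G. ennreal (c2*(2*b*\<delta>/\<beta>)*\<delta> powr Tx))"
  proof (rule sum_mono)
    fix i assume i: "i \<in> G"
    then have iJ: "i \<in> J" "i \<noteq> j" and di: "\<beta>/2 < dist (us i) (us j)" using G far by auto
    have "us i \<noteq> us j" using sep iJ j d by fastforce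
    then have "emeasure \<mu> (T i \<inter> T j) \<le> ennreal (c2 * (b * \<delta> / dist (us i) (us j)) * \<delta> powr Tx)"
      using mu_int[of "as i" "as j" "us i" "us j" \<delta>] Ju iJ j d dlt by auto
    also have "\<dots> \<le> ennreal (c2*(2*b*\<delta>/\<beta>)*\<delta> powr Tx)"
    proof (intro ennreal_leI mult_right_mono mult_left_mono)
      have "b*\<delta>/dist (us i) (us j) \<le> b*\<delta>/(\<beta>/2)"
        using di be b d by (intro divide_left_mono) (auto intro!: mult_pos_pos)
      then show "b * \<delta> / dist (us i) (us j) \<le> 2 * b * \<delta> / \<beta>" by (simp add: mult.commute mult.left_commute)
    qed (use c2 in auto)
    finally show "emeasure \<mu> (T i \<inter> T j) \<le> ennreal (c2*(2*b*\<delta>/\<beta>)*\<delta> powr Tx)" .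
  qed
  also have "\<dots> = ennreal (real (card G) * (c2*(2*b*\<delta>/\<beta>)*\<delta> powr Tx))"
    using c1 by (intro sum_const_ennreal) simp
  also have "\<dots> \<le> ennreal (Cnt * (c2*(2*b*\<delta>/\<beta>)*\<delta> powr Tx))"
    using cG c1 by (intro ennreal_leI mult_right_mono) auto
  finally show "(\<integral>\<^sup>+x. ennreal (indicator (T j) x * fG G x) \<partial>\<mu>) \<le> ennreal (Cnt * (c2*(2*b*\<delta>/\<beta>)*\<delta> powr Tx))" .
qed

end

context cls begin

lemma qa: "q * (1 + \<alpha>) \<ge> 1"
  using q alpha by (simp add: field_simps)

lemma mid_bound:
  assumes j: "j \<in> J" and be: "0 < \<beta>" "\<beta> \<le> R" and g: "0 < g" "g \<le> 1/2" "g = 1/2 \<or> \<delta>/\<beta> \<le> g"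
    and G: "G \<subseteq> {i\<in>J-{j}. \<beta>/2 < dist (us i) (us j) \<and> dist (us i) (us j) \<le> \<beta> \<and> T i \<inter> T j \<noteq> {} \<and>
               ennreal g \<le> gam i j \<and> (g = 1/2 \<or> gam i j < ennreal (2*g))}"
  shows "(\<integral>\<^sup>+x. ennreal ((indicator (T j) x * fG G x) powr q) \<partial>\<mu>)
     \<le> ennreal ((c2*(4+20*b)) powr (1-q) * (2*b*c2*C') powr q * \<delta> powr Tx * \<delta> powr (1 - q*(lam+\<alpha>)))"
proof -
  have b1: "\<beta> < 1" using be R by simp
  define Cnt where "Cnt = C' * \<delta> powr (- lam) * \<beta> * g powr (- \<alpha>)"
  define Mv where "Mv = c2*(4+20*b)*g*\<delta> powr Tx"
  have Cnt: "Cnt > 0" using C' d be g by (simp add: Cnt_def)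
  have Mv: "Mv > 0" using c2 b d g by (simp add: Mv_def)
  have Gf: "G \<subseteq> J - {j}" using G by auto
  have far: "\<forall>i\<in>G. \<beta>/2 < dist (us i) (us j)" using G by auto
  have cG: "real (card G) \<le> Cnt"
  proof -
    let ?S = "{i\<in>J. dist (us i) (us j) \<le> \<beta> \<and>
              T i \<inter> T j \<noteq> {} \<and> gam i j \<ge> ennreal g}"
    have "G \<subseteq> ?S" using G by auto
    then have "card G \<le> card ?S" using J by (intro card_mono) auto
    moreover have "real (card ?S) \<le> Cnt" unfolding Cnt_def
    proof (rule A5_set[OF J j d(1) dlt be(1) b1 g(1)])
      show "g < 1" using g by simp
      show "\<forall>i\<in>J. us i \<in> Y \<and> as i \<in> A" by (rule Ju)
      show "u \<in> Y" "a \<in> A" by (rule ua)+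
      show "\<forall>i\<in>J. \<forall>k\<in>J. i \<noteq> k \<longrightarrow> \<delta> < dist (us i) (us k)" by (rule sep)
      show "\<forall>i\<in>J. TB \<delta> u a \<inter> TB \<delta> (us i) (as i) \<noteq> {} \<and> \<beta> / 8 \<le> dist (us i) u"
        using meet Rrho be by fastforce
    qed
    ultimately show ?thesis by linarith
  qed
  have UM: "emeasure \<mu> (T j \<inter> (\<Union>i\<in>G. T i)) \<le> ennreal Mv"
  proof (cases "g = 1/2")
    case True
    have "emeasure \<mu> (T j \<inter> (\<Union>i\<in>G. T i)) \<le> emeasure \<mu> (T j)"
      by (intro emeasure_mono) auto
    also have "\<dots> \<le> ennreal (c2 * \<delta> powr Tx)" using mu_TB Ju j d dlt by blast
    also have "\<dots> \<le> ennreal Mv" unfolding Mv_def True using c2 b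
      by (intro ennreal_leI) (simp add: field_simps)
    finally show ?thesis .
  next
    case False
    then have gb: "\<delta>/\<beta> \<le> g" using g by simp
    have "diam2 d' (T j \<inter> (\<Union>i\<in>G. T i)) \<le> ennreal (2*(2*g) + 20*b*\<delta>/\<beta>)"
      using geo[OF j Gf be, of "2*g"] g G False by auto
    also have "2*(2*g) + 20*b*\<delta>/\<beta> \<le> (4+20*b)*g"
    proof -
      have "20*b*\<delta>/\<beta> \<le> 20*b*g" using mult_left_mono[OF gb, of "20*b"] b by simp
      then show ?thesis by (simp add: algebra_simps)
    qed
    finally have dm: "diam2 d' (T j \<inter> (\<Union>i\<in>G. T i)) \<le> ennreal ((4+20*b)*g)"
      by (simp add: ennreal_leI order_trans)
    have "emeasure \<mu> (T j \<inter> (\<Union>i\<in>G. T i)) \<le> ennreal (c2 * ((4+20*b)*g) * \<delta> powr Tx)"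
      using mu_sub[OF _ _ d(1) dlt _ _ dm] Ju j b g by auto
    then show ?thesis by (simp add: Mv_def mult.assoc)
  qed
  have "(\<integral>\<^sup>+x. ennreal ((indicator (T j) x * fG G x) powr q) \<partial>\<mu>)
     \<le> ennreal (Mv powr (1-q) * (Cnt * (c2*(2*b*\<delta>/\<beta>)*\<delta> powr Tx)) powr q)"
    by (rule grp_bound[OF j Gf be(1) far UM Mv cG Cnt])
  also have "Cnt * (c2*(2*b*\<delta>/\<beta>)*\<delta> powr Tx) = (2*b*c2*C') * \<delta> powr (-lam) * g powr (-\<alpha>) * \<delta> * \<delta> powr Tx"
    unfolding Cnt_def using be by (simp add: field_simps)
  also have "Mv = (c2*(4+20*b))*g*\<delta> powr Tx" by (simp add: Mv_def)
  also have "((c2*(4+20*b))*g*\<delta> powr Tx) powr (1-q) * ((2*b*c2*C') * \<delta> powr (-lam) * g powr (-\<alpha>) * \<delta> * \<delta> powr Tx) powr q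
     \<le> (c2*(4+20*b)) powr (1-q) * (2*b*c2*C') powr q * \<delta> powr Tx * \<delta> powr (1 - q*(lam+\<alpha>))"
  proof (rule mid_real)
    show "0 < c2*(4+20*b)" using c2 b by simp
    show "0 < 2*b*c2*C'" using c2 b C' by simp
    show "0 < \<delta>" by (rule d)
    show "\<delta> \<le> g"
    proof (cases "g = 1/2")
      case True then show ?thesis using d by simp
    next
      case False
      then have "\<delta>/\<beta> \<le> g" using g by simp
      moreover have "\<delta> \<le> \<delta>/\<beta>" using d be b1 by (simp add: field_simps)
      ultimately show ?thesis by linarith
    qed
    show "0 < q" by (rule q_pos)
    show "q \<le> 1" using q by simp
    show "1 \<le> q * (1 + \<alpha>)" by (rule qa)
  qed
  finally show ?thesis by (simp add: ennreal_leI)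
qed

lemma small_bound:
  assumes j: "j \<in> J" and be: "0 < \<beta>" "\<beta> \<le> R" and h: "0 < h" "h \<le> 2*\<delta>/\<beta>"
    and G: "G \<subseteq> {i\<in>J-{j}. \<beta>/2 < dist (us i) (us j) \<and> dist (us i) (us j) \<le> \<beta> \<and> gam i j < ennreal h}"
  shows "(\<integral>\<^sup>+x. ennreal ((indicator (T j) x * fG G x) powr q) \<partial>\<mu>)
     \<le> ennreal ((c2*(4+20*b)) powr (1-q) * ((C0t/c0t) * 3 powr S * (2*b*c2)) powr q * \<delta> powr Tx * \<delta> powr (1 - q*(lam+\<alpha>)))"
proof (cases "G = {}")
  case True
  then show ?thesis using q_pos by simp
next
  case False
  then obtain i0 where i0: "i0 \<in> G" by blast
  then have "\<delta> < dist (us i0) (us j)" "dist (us i0) (us j) \<le> \<beta>" using G sep j by auto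
  then have db: "\<delta> \<le> \<beta>" by simp
  have b1: "\<beta> < 1" using be R by simp
  define Cnt where "Cnt = (C0t/c0t) * 3 powr S * (\<beta>/\<delta>) powr S"
  define Mv where "Mv = c2*(4+20*b)*(\<delta>/\<beta>)*\<delta> powr Tx"
  have Cnt: "Cnt > 0" using nu d be by (simp add: Cnt_def)
  have Mv: "Mv > 0" using c2 b d be by (simp add: Mv_def)
  have Gf: "G \<subseteq> J - {j}" using G by auto
  have far: "\<forall>i\<in>G. \<beta>/2 < dist (us i) (us j)" using G by auto
  have cG: "real (card G) \<le> Cnt"
  proof -
    let ?S = "{i\<in>J. dist (us i) (us j) \<le> \<beta>}"
    have "G \<subseteq> ?S" using G by auto
    then have "card G \<le> card ?S" using J by (intro card_mono) auto
    moreover have "real (card ?S) \<le> Cnt" unfolding Cnt_def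
    proof (rule count_nu[OF v0(1,2) d(1) db _ J])
      show "\<beta> + \<delta>/2 < dist v0 w0" using v0 be by simp
      show "\<forall>i\<in>J. us i \<in> Y" using Ju by blast
      show "\<forall>i\<in>J. \<forall>k\<in>J. i \<noteq> k \<longrightarrow> \<delta> < dist (us i) (us k)" by (rule sep)
      show "us j \<in> Y" using Ju j by blast
    qed
    ultimately show ?thesis by linarith
  qed
  have UM: "emeasure \<mu> (T j \<inter> (\<Union>i\<in>G. T i)) \<le> ennreal Mv"
  proof -
    have "diam2 d' (T j \<inter> (\<Union>i\<in>G. T i)) \<le> ennreal (2*h + 20*b*\<delta>/\<beta>)"
      using geo[OF j Gf be h(1)] G by auto
    also have "2*h + 20*b*\<delta>/\<beta> \<le> (4+20*b)*(\<delta>/\<beta>)"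
    proof -
      have "2*h \<le> 4*(\<delta>/\<beta>)" using h by simp
      moreover have "20*b*\<delta>/\<beta> = 20*b*(\<delta>/\<beta>)" by simp
      ultimately show ?thesis by (simp add: algebra_simps)
    qed
    finally have dm: "diam2 d' (T j \<inter> (\<Union>i\<in>G. T i)) \<le> ennreal ((4+20*b)*(\<delta>/\<beta>))"
      by (simp add: ennreal_leI order_trans)
    have "emeasure \<mu> (T j \<inter> (\<Union>i\<in>G. T i)) \<le> ennreal (c2 * ((4+20*b)*(\<delta>/\<beta>)) * \<delta> powr Tx)"
      using mu_sub[OF _ _ d(1) dlt _ _ dm] Ju j b d be by auto
    then show ?thesis by (simp add: Mv_def mult.assoc)
  qed
  have "(\<integral>\<^sup>+x. ennreal ((indicator (T j) x * fG G x) powr q) \<partial>\<mu>)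
     \<le> ennreal (Mv powr (1-q) * (Cnt * (c2*(2*b*\<delta>/\<beta>)*\<delta> powr Tx)) powr q)"
    by (rule grp_bound[OF j Gf be(1) far UM Mv cG Cnt])
  also have "Cnt * (c2*(2*b*\<delta>/\<beta>)*\<delta> powr Tx) = ((C0t/c0t) * 3 powr S * (2*b*c2)) * (\<beta>/\<delta>) powr S * (\<delta>/\<beta>) * \<delta> powr Tx"
    unfolding Cnt_def using be by (simp add: field_simps)
  also have "Mv = (c2*(4+20*b))*(\<delta>/\<beta>)*\<delta> powr Tx" by (simp add: Mv_def)
  also have "((c2*(4+20*b))*(\<delta>/\<beta>)*\<delta> powr Tx) powr (1-q) * (((C0t/c0t) * 3 powr S * (2*b*c2)) * (\<beta>/\<delta>) powr S * (\<delta>/\<beta>) * \<delta> powr Tx) powr q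
     \<le> (c2*(4+20*b)) powr (1-q) * ((C0t/c0t) * 3 powr S * (2*b*c2)) powr q * \<delta> powr Tx * \<delta> powr (1 - q*(lam+\<alpha>))"
  proof (rule small_real)
    show "0 < c2*(4+20*b)" using c2 b by simp
    show "0 < (C0t/c0t) * 3 powr S * (2*b*c2)" using c2 b nu by simp
    show "0 < \<delta>" by (rule d)
    show "\<delta> \<le> \<beta>" by (rule db)
    show "\<beta> \<le> 1" using b1 by simp
    show "0 < q" by (rule q_pos)
    show "q \<le> 1" using q by simp
    show "1 \<le> q * S"
    proof -
      have "q * (1 + \<alpha>) \<le> q * S" using alpha q_pos by (intro mult_left_mono) auto
      then show ?thesis using qa by linarith
    qed
    show "S \<le> lam + \<alpha>" using lam by simp
  qed
  finally show ?thesis by (simp add: ennreal_leI)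
qed

end

lemma sum_UN_le_nn:
  fixes f :: "nat \<Rightarrow> real"
  assumes "finite I" "\<And>k. k \<in> I \<Longrightarrow> finite (G k)" "\<And>i. f i \<ge> 0"
  shows "sum f (\<Union>k\<in>I. G k) \<le> (\<Sum>k\<in>I. sum f (G k))"
  using assms
proof (induction I rule: finite_induct)
  case empty then show ?case by simp
next
  case (insert k I)
  have fin: "finite (\<Union>k\<in>I. G k)" "finite (G k)" using insert by auto
  have "sum f (\<Union>k\<in>insert k I. G k) = sum f (G k \<union> (\<Union>k\<in>I. G k))" by simp
  also have "\<dots> \<le> sum f (G k) + sum f (\<Union>k\<in>I. G k)"
  proof -
    have "sum f (G k \<union> (\<Union>k\<in>I. G k)) + sum f (G k \<inter> (\<Union>k\<in>I. G k)) = sum f (G k) + sum f (\<Union>k\<in>I. G k)"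
      using sum.union_inter[OF fin(2) fin(1)] .
    moreover have "sum f (G k \<inter> (\<Union>k\<in>I. G k)) \<ge> 0" using insert by (intro sum_nonneg) auto
    ultimately show ?thesis by linarith
  qed
  also have "\<dots> \<le> sum f (G k) + (\<Sum>k\<in>I. sum f (G k))" using insert by simp
  finally show ?case using insert by simp
qed

lemma sum_cover_le:
  fixes f :: "nat \<Rightarrow> real"
  assumes H: "finite H" and I: "finite I" and G: "\<And>k. k \<in> I \<Longrightarrow> finite (G k)" and f: "\<And>i. f i \<ge> 0"
    and cov: "\<And>i. i \<in> H \<Longrightarrow> f i \<noteq> 0 \<Longrightarrow> \<exists>k\<in>I. i \<in> G k"
  shows "sum f H \<le> (\<Sum>k\<in>I. sum f (G k))"
proof -
  have "sum f H = sum f {i\<in>H. f i \<noteq> 0}"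
    using H by (intro sum.mono_neutral_right) auto
  also have "\<dots> \<le> sum f (\<Union>k\<in>I. G k)"
    using cov I G f by (intro sum_mono2) auto
  also have "\<dots> \<le> (\<Sum>k\<in>I. sum f (G k))" by (rule sum_UN_le_nn[OF I G f])
  finally show ?thesis .
qed

lemma powr_sum_subadd:
  fixes x :: "'i \<Rightarrow> real"
  assumes I: "finite I" and x: "\<And>k. x k \<ge> 0" and q: "0 < q" "q \<le> 1"
  shows "(sum x I) powr q \<le> (\<Sum>k\<in>I. x k powr q)"
proof (cases "sum x I = 0")
  case True then show ?thesis using x by (simp add: sum_nonneg)
next
  case False
  define s where "s = sum x I"
  have s: "s > 0" using False x by (simp add: s_def sum_nonneg order_less_le)
  have each: "s powr q * (x k / s) \<le> x k powr q" if "k \<in> I" for k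
  proof (cases "x k = 0")
    case True then show ?thesis by simp
  next
    case False
    then have xk: "x k > 0" using x order_less_le by metis
    have "x k \<le> s" unfolding s_def using that I x by (intro member_le_sum) auto
    then have le1: "x k / s \<le> 1" using s by simp
    have "x k / s = (x k / s) powr 1" using xk s by simp
    also have "\<dots> \<le> (x k / s) powr q" using le1 xk s q by (intro powr_mono') auto
    finally have "s powr q * (x k / s) \<le> s powr q * (x k / s) powr q" using s by (intro mult_left_mono) auto
    also have "\<dots> = x k powr q" using xk s by (simp add: powr_divide)
    finally show ?thesis .
  qed
  have "s powr q = s powr q * (\<Sum>k\<in>I. x k / s)"
    using s by (simp add: s_def sum_divide_distrib[symmetric])
  also have "\<dots> = (\<Sum>k\<in>I. s powr q * (x k / s))" by (simp add: sum_distrib_left)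
  also have "\<dots> \<le> (\<Sum>k\<in>I. x k powr q)" using each by (intro sum_mono) auto
  finally show ?thesis by (simp add: s_def)
qed


lemma beta_level:
  fixes R x :: real
  assumes "0 < R" "x \<le> R" "R/2^(M+1) < x"
  shows "\<exists>k\<le>M. R/2^k/2 < x \<and> x \<le> R/2^k"
  using assms(3)
proof (induction M)
  case 0 then show ?case using assms by auto
next
  case (Suc M)
  show ?case
  proof (cases "R/2^(M+1) < x")
    case True then show ?thesis using Suc by (meson le_SucI)
  next
    case False
    then have "x \<le> R/2^(Suc M)" by simp
    moreover have "R/2^(Suc M)/2 < x" using Suc.prems by (simp add: field_simps)
    ultimately show ?thesis by blast
  qed
qed

lemma gam_level:
  fixes \<gamma> :: ennreal
  assumes "M \<ge> 1" "ennreal (1/2^M) \<le> \<gamma>"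
  shows "\<exists>m. 1 \<le> m \<and> m \<le> M \<and> ennreal (1/2^m) \<le> \<gamma> \<and> (m = 1 \<or> \<gamma> < ennreal (2*(1/2^m)))"
  using assms
proof (induction M)
  case 0 then show ?case by simp
next
  case (Suc M)
  show ?case
  proof (cases "M \<ge> 1 \<and> ennreal (1/2^M) \<le> \<gamma>")
    case True
    then obtain m where m: "1 \<le> m" "m \<le> M" "ennreal (1/2^m) \<le> \<gamma>" "m = 1 \<or> \<gamma> < ennreal (2*(1/2^m))"
      using Suc.IH by blast
    then have "m \<le> Suc M" by simp
    then show ?thesis using m by blast
  next
    case False
    show ?thesis
    proof (cases "M = 0")
      case True
      have "Suc M = 1" using True by simp
      then have "ennreal (1/2^1) \<le> \<gamma>" using Suc.prems(2) by metis
      moreover have "(1::nat) \<le> 1" "(1::nat) \<le> Suc M" by auto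
      ultimately show ?thesis by blast
    next
      case M0: False
      then have "M \<ge> 1" by simp
      then have "\<not> ennreal (1/2^M) \<le> \<gamma>" using False by blast
      then have "\<gamma> < ennreal (1/2^M)" by (simp add: not_le)
      moreover have "1/2^M = 2*(1/2^(Suc M)::real)" by simp
      ultimately have "\<gamma> < ennreal (2*(1/2^(Suc M)))" by metis
      moreover have "ennreal (1/2^(Suc M)) \<le> \<gamma>" using Suc.prems(2) .
      moreover have "1 \<le> Suc M" by simp
      ultimately show ?thesis by blast
    qed
  qed
qed

lemma powr_add_subadd:
  fixes a b q :: real
  assumes "a \<ge> 0" "b \<ge> 0" "0 < q" "q \<le> 1"
  shows "(a + b) powr q \<le> a powr q + b powr q"
  using powr_sum_subadd[of "{True, False}" "\<lambda>t. if t then a else b" q] assms by auto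


context cls begin

lemma meas_pow[measurable]: "(\<lambda>x. ennreal ((indicator (T j) x * fG G x) powr q)) \<in> borel_measurable \<mu>"
  by measurable

definition "Kg = (c2*(4+20*b)) powr (1-q) * (2*b*c2*C') powr q
     + (c2*(4+20*b)) powr (1-q) * ((C0t/c0t) * 3 powr S * (2*b*c2)) powr q"

lemma Kg_nn: "Kg \<ge> 0" unfolding Kg_def by simp

definition "grp j M km = {i\<in>J-{j}. R/2^(fst km)/2 < dist (us i) (us j) \<and> dist (us i) (us j) \<le> R/2^(fst km) \<and>
   T i \<inter> T j \<noteq> {} \<and> (if snd km = 0 then gam i j < ennreal (1/2^M)
      else ennreal (1/2^(snd km)) \<le> gam i j \<and> (snd km = 1 \<or> gam i j < ennreal (2*(1/2^(snd km)))))}"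

lemma grp_bound1:
  assumes j: "j \<in> J" and M: "1/2^M \<le> \<delta>"
  shows "(\<integral>\<^sup>+x. ennreal ((indicator (T j) x * fG (grp j M (k,m)) x) powr q) \<partial>\<mu>)
     \<le> ennreal (Kg * \<delta> powr Tx * \<delta> powr (1 - q*(lam+\<alpha>)))"
proof -
  define \<beta> where "\<beta> = R/2^k"
  have be: "0 < \<beta>" "\<beta> \<le> R" using R by (auto simp: \<beta>_def divide_le_eq)
  have b1: "\<beta> < 1" using be R by simp
  define Km where "Km = (c2*(4+20*b)) powr (1-q) * (2*b*c2*C') powr q"
  define Ks where "Ks = (c2*(4+20*b)) powr (1-q) * ((C0t/c0t) * 3 powr S * (2*b*c2)) powr q"
  have KmKs: "Km \<le> Kg" "Ks \<le> Kg" unfolding Kg_def Km_def Ks_def by auto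
  have pos: "\<delta> powr Tx * \<delta> powr (1 - q*(lam+\<alpha>)) \<ge> 0" by simp
  have KmB: "ennreal (Km * \<delta> powr Tx * \<delta> powr (1 - q*(lam+\<alpha>))) \<le> ennreal (Kg * \<delta> powr Tx * \<delta> powr (1 - q*(lam+\<alpha>)))"
    using KmKs pos by (intro ennreal_leI) (simp add: mult.assoc mult_right_mono)
  have KsB: "ennreal (Ks * \<delta> powr Tx * \<delta> powr (1 - q*(lam+\<alpha>))) \<le> ennreal (Kg * \<delta> powr Tx * \<delta> powr (1 - q*(lam+\<alpha>)))"
    using KmKs pos by (intro ennreal_leI) (simp add: mult.assoc mult_right_mono)
  have d2: "\<delta> \<le> 2*\<delta>/\<beta>"
  proof -
    have "\<delta> \<le> \<delta>/\<beta>" using d be b1 by (simp add: field_simps)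
    also have "\<dots> \<le> 2*\<delta>/\<beta>" using d be by (simp add: divide_right_mono)
    finally show ?thesis .
  qed
  show ?thesis
  proof (cases "m = 0")
    case True
    have "grp j M (k,m) \<subseteq> {i\<in>J-{j}. \<beta>/2 < dist (us i) (us j) \<and> dist (us i) (us j) \<le> \<beta> \<and> gam i j < ennreal (1/2^M)}"
      using True by (auto simp: grp_def \<beta>_def)
    from small_bound[OF j be _ _ this] have "(\<integral>\<^sup>+x. ennreal ((indicator (T j) x * fG (grp j M (k,m)) x) powr q) \<partial>\<mu>)
        \<le> ennreal (Ks * \<delta> powr Tx * \<delta> powr (1 - q*(lam+\<alpha>)))"
      unfolding Ks_def using M d2 by simp
    then show ?thesis using KsB by (rule order_trans)
  next
    case m0: False
    define g where "g = (1/2^m :: real)"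
    have "(2::real)^1 \<le> 2^m" using m0 by (intro power_increasing) auto
    then have g: "0 < g" "g \<le> 1/2" by (auto simp: g_def)
    show ?thesis
    proof (cases "m = 1 \<or> \<delta>/\<beta> \<le> g")
      case True
      have g12: "g = 1/2 \<or> \<delta>/\<beta> \<le> g" using True by (auto simp: g_def)
      have "grp j M (k,m) \<subseteq> {i\<in>J-{j}. \<beta>/2 < dist (us i) (us j) \<and> dist (us i) (us j) \<le> \<beta> \<and> T i \<inter> T j \<noteq> {} \<and>
               ennreal g \<le> gam i j \<and> (g = 1/2 \<or> gam i j < ennreal (2*g))}"
        using m0 by (auto simp: grp_def \<beta>_def g_def)
      from mid_bound[OF j be g g12 this] have "(\<integral>\<^sup>+x. ennreal ((indicator (T j) x * fG (grp j M (k,m)) x) powr q) \<partial>\<mu>)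
        \<le> ennreal (Km * \<delta> powr Tx * \<delta> powr (1 - q*(lam+\<alpha>)))"
        unfolding Km_def by simp
      then show ?thesis using KmB by (rule order_trans)
    next
      case False
      then have gs: "g < \<delta>/\<beta>" "m \<noteq> 1" by auto
      have "grp j M (k,m) \<subseteq> {i\<in>J-{j}. \<beta>/2 < dist (us i) (us j) \<and> dist (us i) (us j) \<le> \<beta> \<and> gam i j < ennreal (2*g)}"
        using m0 gs by (auto simp: grp_def \<beta>_def g_def)
      moreover have "2*g \<le> 2*\<delta>/\<beta>" using gs by simp
      moreover have "0 < 2*g" using g by simp
      ultimately have "(\<integral>\<^sup>+x. ennreal ((indicator (T j) x * fG (grp j M (k,m)) x) powr q) \<partial>\<mu>)
        \<le> ennreal (Ks * \<delta> powr Tx * \<delta> powr (1 - q*(lam+\<alpha>)))"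
        unfolding Ks_def using small_bound[OF j be] by blast
      then show ?thesis using KsB by (rule order_trans)
    qed
  qed
qed

end

lemma powr_ge1_neg: "0 < x \<Longrightarrow> x \<le> 1 \<Longrightarrow> e \<le> 0 \<Longrightarrow> (1::real) \<le> x powr e"
proof -
  assume as: "0 < x" "x \<le> 1" "e \<le> 0"
  have "x powr (-e) \<le> 1" using as by (intro powr_le1) auto
  moreover have "x powr (-e) > 0" using as by simp
  ultimately have "1 \<le> 1 / x powr (-e)" by simp
  also have "1 / x powr (-e) = x powr e" using as by (simp add: powr_minus divide_inverse)
  finally show ?thesis .
qed

context cls begin

lemma Eneg: "1 - q*(lam+\<alpha>) \<le> 0"
proof -
  have "q * (1 + \<alpha>) \<le> q * (lam + \<alpha>)" using lam alpha q_pos S by (intro mult_left_mono) auto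
  then show ?thesis using qa by linarith
qed

lemma dE: "1 \<le> \<delta> powr (1 - q*(lam+\<alpha>))"
  using powr_ge1_neg[OF d(1) _ Eneg] d by simp

lemma tube_bound:
  assumes j: "j \<in> J" and M: "1/2^M \<le> \<delta>" "M \<ge> 1"
  shows "(\<integral>\<^sup>+x. ennreal ((indicator (T j) x * fG J x) powr q) \<partial>\<mu>)
     \<le> ennreal ((c2 + real ((M+1)*(M+1)) * Kg) * \<delta> powr Tx * \<delta> powr (1 - q*(lam+\<alpha>)))"
proof -
  define I where "I = {0..M} \<times> {0..M}"
  have I: "finite I" "card I = (M+1)*(M+1)" by (auto simp: I_def card_cartesian_product)
  have gfin: "finite (grp j M km)" for km using J by (auto simp: grp_def)
  have cover: "fG (J-{j}) x \<le> (\<Sum>km\<in>I. fG (grp j M km) x)" if xj: "x \<in> T j" for x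
  proof (rule sum_cover_le[OF _ I(1) gfin])
    show "finite (J - {j})" using J by simp
    show "\<And>i. 0 \<le> (indicator (T i) x :: real)" by simp
    fix i assume i: "i \<in> J - {j}" "indicator (T i) x \<noteq> (0::real)"
    then have xi: "x \<in> T i" by (auto simp: indicator_def split: if_splits)
    have iJ: "i \<in> J" "i \<noteq> j" using i by auto
    have dgt: "\<delta> < dist (us i) (us j)" using sep iJ j by blast
    have dle: "dist (us i) (us j) \<le> R" using Rdiam iJ j by blast
    have "R/2^(M+1) < \<delta>"
    proof -
      have "R/2^(M+1) < 1/2^(M+1)" using R by (simp add: divide_strict_right_mono)
      also have "\<dots> \<le> 1/2^M" by (intro divide_left_mono) auto
      finally show ?thesis using M by linarith
    qed
    then obtain k where k: "k \<le> M" "R/2^k/2 < dist (us i) (us j)" "dist (us i) (us j) \<le> R/2^k"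
      using beta_level[OF R(1) dle, of M] dgt by auto
    have ne: "T i \<inter> T j \<noteq> {}" using xi xj by blast
    show "\<exists>km\<in>I. i \<in> grp j M km"
    proof (cases "gam i j < ennreal (1/2^M)")
      case True
      then have "i \<in> grp j M (k,0)" using iJ k ne by (simp add: grp_def)
      moreover have "(k,0) \<in> I" using k by (simp add: I_def)
      ultimately show ?thesis by blast
    next
      case False
      then have "ennreal (1/2^M) \<le> gam i j" by (simp add: not_less)
      then obtain m where m: "1 \<le> m" "m \<le> M" "ennreal (1/2^m) \<le> gam i j" "m = 1 \<or> gam i j < ennreal (2*(1/2^m))"
        using gam_level[OF M(2)] by blast
      then have "i \<in> grp j M (k,m)" using iJ k ne by (simp add: grp_def)
      moreover have "(k,m) \<in> I" using k m by (simp add: I_def)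
      ultimately show ?thesis by blast
    qed
  qed
  have pt: "ennreal ((indicator (T j) x * fG J x) powr q)
     \<le> indicator (T j) x + (\<Sum>km\<in>I. ennreal ((indicator (T j) x * fG (grp j M km) x) powr q))" for x
  proof (cases "x \<in> T j")
    case False then show ?thesis using q_pos by simp
  next
    case True
    have "fG J x = indicator (T j) x + fG (J-{j}) x" using J j by (simp add: sum.remove)
    also have "\<dots> = 1 + fG (J-{j}) x" using True by simp
    finally have F: "fG J x = 1 + fG (J-{j}) x" .
    have nn: "0 \<le> fG (J-{j}) x" by (simp add: sum_nonneg)
    have "fG J x powr q \<le> (1 + (\<Sum>km\<in>I. fG (grp j M km) x)) powr q"
      unfolding F using cover[OF True] nn q_pos by (intro powr_mono2) auto
    also have "\<dots> \<le> 1 powr q + (\<Sum>km\<in>I. fG (grp j M km) x) powr q"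
      using q_pos q by (intro powr_add_subadd) (auto intro!: sum_nonneg)
    also have "(\<Sum>km\<in>I. fG (grp j M km) x) powr q \<le> (\<Sum>km\<in>I. fG (grp j M km) x powr q)"
      using q_pos q I by (intro powr_sum_subadd) (auto intro!: sum_nonneg)
    finally have le: "fG J x powr q \<le> 1 + (\<Sum>km\<in>I. fG (grp j M km) x powr q)" by simp
    have "ennreal ((indicator (T j) x * fG J x) powr q) = ennreal (fG J x powr q)" using True by simp
    also have "\<dots> \<le> ennreal (1 + (\<Sum>km\<in>I. fG (grp j M km) x powr q))" using le by (rule ennreal_leI)
    also have "\<dots> = 1 + (\<Sum>km\<in>I. ennreal (fG (grp j M km) x powr q))"
      by (simp add: ennreal_plus sum_nonneg)
    also have "\<dots> = indicator (T j) x + (\<Sum>km\<in>I. ennreal ((indicator (T j) x * fG (grp j M km) x) powr q))"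
      using True by simp
    finally show ?thesis .
  qed
  have "(\<integral>\<^sup>+x. ennreal ((indicator (T j) x * fG J x) powr q) \<partial>\<mu>)
      \<le> (\<integral>\<^sup>+x. indicator (T j) x + (\<Sum>km\<in>I. ennreal ((indicator (T j) x * fG (grp j M km) x) powr q)) \<partial>\<mu>)"
    by (intro nn_integral_mono pt)
  also have "\<dots> = emeasure \<mu> (T j) + (\<Sum>km\<in>I. (\<integral>\<^sup>+x. ennreal ((indicator (T j) x * fG (grp j M km) x) powr q) \<partial>\<mu>))"
  proof -
    have "(\<integral>\<^sup>+x. indicator (T j) x + (\<Sum>km\<in>I. ennreal ((indicator (T j) x * fG (grp j M km) x) powr q)) \<partial>\<mu>)
      = (\<integral>\<^sup>+x. indicator (T j) x \<partial>\<mu>) + (\<integral>\<^sup>+x. (\<Sum>km\<in>I. ennreal ((indicator (T j) x * fG (grp j M km) x) powr q)) \<partial>\<mu>)"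
      by (rule nn_integral_add) auto
    also have "(\<integral>\<^sup>+x. (\<Sum>km\<in>I. ennreal ((indicator (T j) x * fG (grp j M km) x) powr q)) \<partial>\<mu>)
      = (\<Sum>km\<in>I. (\<integral>\<^sup>+x. ennreal ((indicator (T j) x * fG (grp j M km) x) powr q) \<partial>\<mu>))"
      by (rule nn_integral_sum) auto
    finally show ?thesis by simp
  qed
  also have "\<dots> \<le> ennreal (c2 * \<delta> powr Tx) + (\<Sum>km\<in>I. ennreal (Kg * \<delta> powr Tx * \<delta> powr (1 - q*(lam+\<alpha>))))"
  proof (intro add_mono sum_mono)
    show "emeasure \<mu> (T j) \<le> ennreal (c2 * \<delta> powr Tx)" using mu_TB Ju j d dlt by blast
    fix km assume "km \<in> I"
    obtain k m where "km = (k,m)" by force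
    then show "(\<integral>\<^sup>+x. ennreal ((indicator (T j) x * fG (grp j M km) x) powr q) \<partial>\<mu>)
      \<le> ennreal (Kg * \<delta> powr Tx * \<delta> powr (1 - q*(lam+\<alpha>)))" using grp_bound1[OF j M(1)] by simp
  qed
  also have "\<dots> = ennreal (c2 * \<delta> powr Tx + real (card I) * (Kg * \<delta> powr Tx * \<delta> powr (1 - q*(lam+\<alpha>))))"
  proof -
    have K0: "Kg * \<delta> powr Tx * \<delta> powr (1 - q*(lam+\<alpha>)) \<ge> 0" using Kg_nn by simp
    have "(\<Sum>km\<in>I. ennreal (Kg * \<delta> powr Tx * \<delta> powr (1 - q*(lam+\<alpha>))))
        = ennreal (real (card I) * (Kg * \<delta> powr Tx * \<delta> powr (1 - q*(lam+\<alpha>))))"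
      by (rule sum_const_ennreal[OF K0])
    moreover have "ennreal (c2 * \<delta> powr Tx + real (card I) * (Kg * \<delta> powr Tx * \<delta> powr (1 - q*(lam+\<alpha>))))
       = ennreal (c2 * \<delta> powr Tx) + ennreal (real (card I) * (Kg * \<delta> powr Tx * \<delta> powr (1 - q*(lam+\<alpha>))))"
      using c2 K0 by (intro ennreal_plus) auto
    ultimately show ?thesis by simp
  qed
  also have "\<dots> \<le> ennreal ((c2 + real ((M+1)*(M+1)) * Kg) * \<delta> powr Tx * \<delta> powr (1 - q*(lam+\<alpha>)))"
  proof (intro ennreal_leI)
    have "c2 * \<delta> powr Tx \<le> c2 * \<delta> powr Tx * \<delta> powr (1 - q*(lam+\<alpha>))"
      using mult_left_mono[OF dE, of "c2 * \<delta> powr Tx"] c2 by simp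
    then show "c2 * \<delta> powr Tx + real (card I) * (Kg * \<delta> powr Tx * \<delta> powr (1 - q*(lam+\<alpha>)))
      \<le> (c2 + real ((M+1)*(M+1)) * Kg) * \<delta> powr Tx * \<delta> powr (1 - q*(lam+\<alpha>))"
      using I by (simp add: algebra_simps)
  qed
  finally show ?thesis .
qed

lemma class_bound:
  assumes M: "1/2^M \<le> \<delta>" "M \<ge> 1"
  shows "(\<integral>\<^sup>+x. ennreal (fG J x powr (1+q)) \<partial>\<mu>)
     \<le> ennreal (real (card J) * ((c2 + real ((M+1)*(M+1)) * Kg) * \<delta> powr Tx * \<delta> powr (1 - q*(lam+\<alpha>))))"
proof -
  have pt: "ennreal (fG J x powr (1+q)) = (\<Sum>j\<in>J. ennreal ((indicator (T j) x * fG J x) powr q))" for x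
  proof -
    have F0: "fG J x \<ge> 0" by (simp add: sum_nonneg)
    have "fG J x powr (1+q) = fG J x powr 1 * fG J x powr q" by (rule powr_add)
    also have "\<dots> = fG J x * fG J x powr q" using F0 by simp
    also have "\<dots> = (\<Sum>j\<in>J. indicator (T j) x * fG J x powr q)" by (simp add: sum_distrib_right)
    also have "\<dots> = (\<Sum>j\<in>J. (indicator (T j) x * fG J x) powr q)"
      by (intro sum.cong) (auto simp: indicator_def)
    finally show ?thesis by simp
  qed
  have "(\<integral>\<^sup>+x. ennreal (fG J x powr (1+q)) \<partial>\<mu>) = (\<Sum>j\<in>J. (\<integral>\<^sup>+x. ennreal ((indicator (T j) x * fG J x) powr q) \<partial>\<mu>))"
    unfolding pt by (rule nn_integral_sum) auto
  also have "\<dots> \<le> (\<Sum>j\<in>J. ennreal ((c2 + real ((M+1)*(M+1)) * Kg) * \<delta> powr Tx * \<delta> powr (1 - q*(lam+\<alpha>))))"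
    by (intro sum_mono tube_bound M) 
  also have "\<dots> = ennreal (real (card J) * ((c2 + real ((M+1)*(M+1)) * Kg) * \<delta> powr Tx * \<delta> powr (1 - q*(lam+\<alpha>))))"
    using c2 Kg_nn by (intro sum_const_ennreal) simp
  finally show ?thesis .
qed

end

context hbl begin

definition "KG = (c2*(4+20*b)) powr (1-q) * (2*b*c2*C') powr q
     + (c2*(4+20*b)) powr (1-q) * ((C0t/c0t) * 3 powr S * (2*b*c2)) powr q"

lemma KG_nn: "KG \<ge> 0" unfolding KG_def by simp

lemma good_class_bound:
  fixes J :: "nat set"
  assumes d: "0 < \<delta>" "\<delta> \<le> 1/2"
    and J: "finite J" and Ju: "\<forall>i\<in>J. us i \<in> Y \<and> as i \<in> A" and ua: "u \<in> Y" "a \<in> A"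
    and sep: "\<forall>i\<in>J. \<forall>k\<in>J. i \<noteq> k \<longrightarrow> dist (us i) (us k) > \<delta>"
    and meet: "\<forall>i\<in>J. TB \<delta> u a \<inter> TB \<delta> (us i) (as i) \<noteq> {}"
    and R: "0 < R" "R < 1" and Rdiam: "\<forall>i\<in>J. \<forall>k\<in>J. dist (us i) (us k) \<le> R"
    and Rrho: "\<forall>i\<in>J. dist (us i) u \<ge> R/8"
    and v0: "v0 \<in> Y" "w0 \<in> Y" "R + \<delta>/2 < dist v0 w0"
    and M: "1/2^M \<le> \<delta>" "M \<ge> 1"
  shows "(\<integral>\<^sup>+x. ennreal ((\<Sum>i\<in>J. indicator (TB \<delta> (us i) (as i)) x) powr (1+q)) \<partial>\<mu>)
     \<le> ennreal (real (card J) * ((c2 + real ((M+1)*(M+1)) * KG) * \<delta> powr Tx * \<delta> powr (1 - q*(lam+\<alpha>))))"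
proof -
  interpret C: cls \<mu> d' Y \<nu> A It W S Tx \<alpha> lam c2 b C' c0t C0t q \<delta> us as u a J R v0 w0
  proof (rule cls.intro[OF hbl_axioms], rule cls_axioms.intro)
  qed (use assms in auto)
  show ?thesis using C.class_bound[OF M] unfolding C.Kg_def KG_def .
qed

lemma small_class_bound:
  fixes J :: "nat set"
  assumes d: "0 < \<delta>" "\<delta> < 1" and J: "finite J" "card J \<le> 1" and Ju: "\<forall>i\<in>J. us i \<in> Y \<and> as i \<in> A"
  shows "(\<integral>\<^sup>+x. ennreal ((\<Sum>i\<in>J. indicator (TB \<delta> (us i) (as i)) x) powr (1+q)) \<partial>\<mu>)
     \<le> ennreal (real (card J) * (c2 * \<delta> powr Tx))"
proof (cases "J = {}")
  case True then show ?thesis using q_pos by simp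
next
  case False
  have "card J \<noteq> 0" using J False by simp
  then have "card J = 1" using J by linarith
  then obtain i where J1: "J = {i}" by (rule card_1_singletonE)
  have "(\<integral>\<^sup>+x. ennreal ((\<Sum>i\<in>J. indicator (TB \<delta> (us i) (as i)) x) powr (1+q)) \<partial>\<mu>)
      = (\<integral>\<^sup>+x. indicator (TB \<delta> (us i) (as i)) x \<partial>\<mu>)"
  proof (intro nn_integral_cong)
    fix x
    show "ennreal ((\<Sum>i\<in>J. indicator (TB \<delta> (us i) (as i)) x) powr (1+q)) = indicator (TB \<delta> (us i) (as i)) x"
    proof (cases "x \<in> TB \<delta> (us i) (as i)")
      case True then show ?thesis unfolding J1 by simp
    next
      case False then show ?thesis unfolding J1 using q_pos by simp
    qed
  qed
  also have "\<dots> = emeasure \<mu> (TB \<delta> (us i) (as i))" by simp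
  also have "\<dots> \<le> ennreal (c2 * \<delta> powr Tx)" using mu_TB Ju J1 d by blast
  finally show ?thesis using J1 by simp
qed

lemma bounded_N_bound:
  assumes d: "0 < \<delta>" "\<delta> < 1" and Ju: "\<forall>j<N. us j \<in> Y \<and> as j \<in> A" and NB: "N \<le> Nb"
  shows "(\<integral>\<^sup>+x. ennreal ((\<Sum>j<N. indicator (TB \<delta> (us j) (as j)) x) powr (1+q)) \<partial>\<mu>)
     \<le> ennreal (real Nb powr q * c2 * \<delta> powr Tx * real N)"
proof -
  have pt: "ennreal ((\<Sum>j<N. indicator (TB \<delta> (us j) (as j)) x) powr (1+q))
     \<le> ennreal (real Nb powr q) * (\<Sum>j<N. indicator (TB \<delta> (us j) (as j)) x)" for x
  proof -
    define F where "F = (\<Sum>j<N. indicator (TB \<delta> (us j) (as j)) x :: real)"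
    have F0: "F \<ge> 0" by (simp add: F_def sum_nonneg)
    have "F \<le> (\<Sum>j<N. 1)" unfolding F_def by (intro sum_mono) (simp add: indicator_def)
    then have FN: "F \<le> real Nb" using NB by simp
    have "F powr (1+q) = F * F powr q" using F0 by (simp add: powr_add)
    also have "\<dots> \<le> F * real Nb powr q" using F0 FN q_pos by (intro mult_left_mono powr_mono2) auto
    finally have "F powr (1+q) \<le> real Nb powr q * F" by (simp add: mult.commute)
    then have "ennreal (F powr (1+q)) \<le> ennreal (real Nb powr q * F)" by (rule ennreal_leI)
    also have "\<dots> = ennreal (real Nb powr q) * ennreal F" using F0 by (intro ennreal_mult) auto
    finally have "ennreal (F powr (1+q)) \<le> ennreal (real Nb powr q) * ennreal F" .
    moreover have "ennreal F = (\<Sum>j<N. indicator (TB \<delta> (us j) (as j)) x)"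
      by (simp add: F_def ennreal_indicator[symmetric])
    ultimately show ?thesis unfolding F_def by simp
  qed
  have "(\<integral>\<^sup>+x. ennreal ((\<Sum>j<N. indicator (TB \<delta> (us j) (as j)) x) powr (1+q)) \<partial>\<mu>)
      \<le> (\<integral>\<^sup>+x. ennreal (real Nb powr q) * (\<Sum>j<N. indicator (TB \<delta> (us j) (as j)) x) \<partial>\<mu>)"
    by (intro nn_integral_mono pt)
  also have "\<dots> = ennreal (real Nb powr q) * (\<Sum>j<N. emeasure \<mu> (TB \<delta> (us j) (as j)))"
    by (subst nn_integral_cmult) (auto simp: nn_integral_sum)
  also have "\<dots> \<le> ennreal (real Nb powr q) * (\<Sum>j<N. ennreal (c2 * \<delta> powr Tx))"
    using mu_TB Ju d by (intro mult_left_mono sum_mono) auto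
  also have "\<dots> = ennreal (real Nb powr q * c2 * \<delta> powr Tx * real N)"
  proof -
    have "(\<Sum>j<N. ennreal (c2 * \<delta> powr Tx)) = ennreal (real (card {..<N}) * (c2 * \<delta> powr Tx))"
      using c2 by (intro sum_const_ennreal) simp
    then have "ennreal (real Nb powr q) * (\<Sum>j<N. ennreal (c2 * \<delta> powr Tx))
       = ennreal (real Nb powr q) * ennreal (real N * (c2 * \<delta> powr Tx))" by simp
    also have "\<dots> = ennreal (real Nb powr q * (real N * (c2 * \<delta> powr Tx)))"
      using c2 by (intro ennreal_mult[symmetric]) auto
    finally show ?thesis by (simp add: mult_ac)
  qed
  finally show ?thesis .
qed

lemma sep_card:
  assumes F: "finite F" "Y \<subseteq> (\<Union>y\<in>F. ball y r)" and r: "2*r \<le> \<delta>"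
    and Ju: "\<forall>j<N. us j \<in> Y" and sep: "\<forall>j<N. \<forall>k<N. j \<noteq> k \<longrightarrow> dist (us j) (us k) > \<delta>"
  shows "N \<le> card F"
proof -
  have "\<forall>j. \<exists>y. j < N \<longrightarrow> y \<in> F \<and> us j \<in> ball y r" using Ju F by blast
  from choice[OF this] obtain c where c0: "\<forall>j. j < N \<longrightarrow> c j \<in> F \<and> us j \<in> ball (c j) r" by blast
  then have c: "\<forall>j<N. c j \<in> F \<and> us j \<in> ball (c j) r" by blast
  have "inj_on c {..<N}"
  proof (rule inj_onI)
    fix j k assume jk: "j \<in> {..<N}" "k \<in> {..<N}" "c j = c k"
    show "j = k"
    proof (rule ccontr)
      assume "j \<noteq> k"
      then have "dist (us j) (us k) > \<delta>" using sep jk by auto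
      moreover have "dist (c j) (us j) < r" "dist (c j) (us k) < r" using c jk by auto
      then have "dist (us j) (us k) < 2*r" using dist_triangle[of "us j" "us k" "c j"] dist_commute[of "c j" "us j"] by linarith
      ultimately show False using r by linarith
    qed
  qed
  moreover have "c ` {..<N} \<subseteq> F" using c by auto
  ultimately have "card {..<N} \<le> card F" using F(1) by (intro card_inj_on_le)
  then show ?thesis by simp
qed

end

lemma pow_sum_le:
  fixes v :: "'c \<Rightarrow> real"
  assumes I: "finite I" and v: "\<And>c. v c \<ge> 0" and p: "p \<ge> 1"
  shows "(\<Sum>c\<in>I. v c) powr p \<le> real (card I) powr p * (\<Sum>c\<in>I. v c powr p)"
proof (cases "I = {}")
  case True then show ?thesis by simp
next
  case False
  define m where "m = Max (v ` I)"
  have mI: "m \<in> v ` I" unfolding m_def using I False by (intro Max_in) auto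
  then obtain c0 where c0: "c0 \<in> I" "m = v c0" by blast
  have le: "v c \<le> m" if "c \<in> I" for c unfolding m_def using I that by (intro Max_ge) auto
  have "(\<Sum>c\<in>I. v c) \<le> real (card I) * m" using sum_bounded_above[of I v m] le by simp
  then have "(\<Sum>c\<in>I. v c) powr p \<le> (real (card I) * m) powr p"
    using v p by (intro powr_mono2) (auto intro: sum_nonneg)
  also have "\<dots> = real (card I) powr p * m powr p" using v c0 by (simp add: powr_mult)
  also have "m powr p \<le> (\<Sum>c\<in>I. v c powr p)" unfolding c0(2) using I c0(1) by (intro member_le_sum) auto
  then have "real (card I) powr p * m powr p \<le> real (card I) powr p * (\<Sum>c\<in>I. v c powr p)"
    by (intro mult_left_mono) auto
  finally show ?thesis .
qed

context hbl begin

lemma class_any: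
  fixes c :: "nat set"
  assumes d: "0 < \<delta>" "\<delta> \<le> 1/2" and c: "c \<subseteq> {..<N}"
    and Ju: "\<forall>j<N. us j \<in> Y \<and> as j \<in> A" and ua: "u \<in> Y" "a \<in> A"
    and sep: "\<forall>j<N. \<forall>k<N. j \<noteq> k \<longrightarrow> dist (us j) (us k) > \<delta>"
    and meet: "\<forall>j<N. TB \<delta> u a \<inter> TB \<delta> (us j) (as j) \<noteq> {}"
    and M: "1/2^M \<le> \<delta>" "M \<ge> 1" and v0: "v0 \<in> Y" "w0 \<in> Y"
    and cases: "card c \<le> 1 \<or> (\<exists>R. 0 < R \<and> R < 1 \<and> (\<forall>i\<in>c. \<forall>k\<in>c. dist (us i) (us k) \<le> R) \<and>
                 (\<forall>i\<in>c. dist (us i) u \<ge> R/8) \<and> R + \<delta>/2 < dist v0 w0)"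
  shows "(\<integral>\<^sup>+x. ennreal ((\<Sum>i\<in>c. indicator (TB \<delta> (us i) (as i)) x) powr (1+q)) \<partial>\<mu>)
     \<le> ennreal (real (card c) * ((c2 + real ((M+1)*(M+1)) * KG) * \<delta> powr Tx * \<delta> powr (1 - q*(lam+\<alpha>))))"
proof -
  have cf: "finite c" using c finite_subset by blast
  have Juc: "\<forall>i\<in>c. us i \<in> Y \<and> as i \<in> A" using Ju c by blast
  show ?thesis
  proof (cases "card c \<le> 1")
    case True
    have "(\<integral>\<^sup>+x. ennreal ((\<Sum>i\<in>c. indicator (TB \<delta> (us i) (as i)) x) powr (1+q)) \<partial>\<mu>)
       \<le> ennreal (real (card c) * (c2 * \<delta> powr Tx))"
      using small_class_bound[OF d(1) _ cf True Juc] d by simp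
    also have "\<dots> \<le> ennreal (real (card c) * ((c2 + real ((M+1)*(M+1)) * KG) * \<delta> powr Tx * \<delta> powr (1 - q*(lam+\<alpha>))))"
    proof (intro ennreal_leI mult_left_mono)
      have E: "1 - q*(lam+\<alpha>) \<le> 0"
      proof -
        have "q * (1 + \<alpha>) \<le> q * (lam + \<alpha>)" using lam alpha q_pos S by (intro mult_left_mono) auto
        moreover have "q * (1 + \<alpha>) \<ge> 1" using q alpha by (simp add: field_simps)
        ultimately show ?thesis by linarith
      qed
      have "1 \<le> \<delta> powr (1 - q*(lam+\<alpha>))" using powr_ge1_neg[OF d(1) _ E] d by simp
      then have "c2 * \<delta> powr Tx \<le> c2 * \<delta> powr Tx * \<delta> powr (1 - q*(lam+\<alpha>))"
        using mult_left_mono[of 1 "\<delta> powr (1 - q*(lam+\<alpha>))" "c2 * \<delta> powr Tx"] c2 by simp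
      also have "\<dots> \<le> (c2 + real ((M+1)*(M+1)) * KG) * \<delta> powr Tx * \<delta> powr (1 - q*(lam+\<alpha>))"
        using KG_nn by (intro mult_right_mono) auto
      finally show "c2 * \<delta> powr Tx \<le> (c2 + real ((M+1)*(M+1)) * KG) * \<delta> powr Tx * \<delta> powr (1 - q*(lam+\<alpha>))" .
    qed auto
    finally show ?thesis .
  next
    case False
    then obtain R where R: "0 < R" "R < 1" "\<forall>i\<in>c. \<forall>k\<in>c. dist (us i) (us k) \<le> R"
      "\<forall>i\<in>c. dist (us i) u \<ge> R/8" "R + \<delta>/2 < dist v0 w0" using cases by blast
    show ?thesis
    proof (rule good_class_bound[OF d cf Juc ua _ _ R(1,2,3,4) v0 R(5) M])
      show "\<forall>i\<in>c. \<forall>k\<in>c. i \<noteq> k \<longrightarrow> \<delta> < dist (us i) (us k)" using sep c by blast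
      show "\<forall>i\<in>c. TB \<delta> u a \<inter> TB \<delta> (us i) (as i) \<noteq> {}" using meet c by blast
    qed
  qed
qed

end

context hbl begin

lemma main_classes:
  fixes Fc :: "'z set"
  assumes v0: "v0 \<in> Y" "w0 \<in> Y" and R0: "0 < R0" "R0 \<le> 1/4" "2*R0 + \<delta>/2 < dist v0 w0"
    and Fc: "finite Fc" "Y \<subseteq> (\<Union>y\<in>Fc. ball y (R0/2))"
    and hb: "hairbrush Y A It W N \<delta> us as" and d2: "\<delta> \<le> 1/2"
    and M: "1/2^M \<le> \<delta>" "M \<ge> 1"
  shows "(\<integral>\<^sup>+x. ennreal ((\<Sum>j<N. indicator (TB \<delta> (us j) (as j)) x) powr (1+q)) \<partial>\<mu>)
     \<le> ennreal (real (M + card Fc + 2) powr (2+q) * ((c2 + real ((M+1)*(M+1)) * KG) * \<delta> powr Tx * \<delta> powr (1 - q*(lam+\<alpha>))) * real N)"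
proof -
  have d: "0 < \<delta>" "\<delta> < 1" and Ju: "\<forall>j<N. us j \<in> Y \<and> as j \<in> A"
    and sep: "\<forall>j<N. \<forall>k<N. j \<noteq> k \<longrightarrow> dist (us j) (us k) > \<delta>"
    using hb unfolding hairbrush_def by auto
  obtain u a where ua: "u \<in> Y" "a \<in> A" and meet: "\<forall>j<N. TB \<delta> u a \<inter> TB \<delta> (us j) (as j) \<noteq> {}"
    using hb unfolding hairbrush_def by blast
  define K1 where "K1 = (c2 + real ((M+1)*(M+1)) * KG) * \<delta> powr Tx * \<delta> powr (1 - q*(lam+\<alpha>))"
  have K1: "K1 \<ge> 0" using c2 KG_nn by (simp add: K1_def)
  define \<rho> where "\<rho> j = dist (us j) u" for j
  define lvl where "lvl k = {j. j < N \<and> R0/2^k/2 < \<rho> j \<and> \<rho> j \<le> R0/2^k}" for k :: nat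
  define far where "far y = {j. j < N \<and> R0 < \<rho> j \<and> us j \<in> ball y (R0/2)}" for y
  define tiny where "tiny = {j. j < N \<and> \<rho> j \<le> R0/2^M/2}"
  define CL where "CL = lvl ` {0..M} \<union> far ` Fc \<union> {tiny}"
  have CLf: "finite CL" using Fc by (simp add: CL_def)
  have cardCL: "card CL \<le> M + card Fc + 2"
  proof -
    have "card CL \<le> card (lvl ` {0..M} \<union> far ` Fc) + card {tiny}"
      unfolding CL_def by (rule card_Un_le)
    also have "\<dots> \<le> card (lvl ` {0..M}) + card (far ` Fc) + 1"
      using card_Un_le[of "lvl ` {0..M}" "far ` Fc"] by simp
    also have "\<dots> \<le> (M+1) + card Fc + 1"
      using card_image_le[of "{0..M}" lvl] card_image_le[OF Fc(1), of far] by simp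
    finally show ?thesis by simp
  qed
  have CLsub: "c \<subseteq> {..<N}" if "c \<in> CL" for c
    using that by (auto simp: CL_def lvl_def far_def tiny_def)
  have dist_rho: "dist (us i) (us k) \<le> \<rho> i + \<rho> k" for i k
    unfolding \<rho>_def using dist_triangle[of "us i" "us k" u] dist_commute[of u "us k"] by linarith
  have Dpos: "R0 + \<delta>/2 < dist v0 w0" using R0 by linarith
  have cls_bd: "(\<integral>\<^sup>+x. ennreal ((\<Sum>i\<in>c. indicator (TB \<delta> (us i) (as i)) x) powr (1+q)) \<partial>\<mu>) \<le> ennreal (real (card c) * K1)"
    if cCL: "c \<in> CL" for c
    unfolding K1_def
  proof (rule class_any[OF d(1) d2 CLsub[OF cCL] Ju ua sep meet M v0])
    show "card c \<le> 1 \<or> (\<exists>R. 0 < R \<and> R < 1 \<and> (\<forall>i\<in>c. \<forall>k\<in>c. dist (us i) (us k) \<le> R) \<and>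
                 (\<forall>i\<in>c. dist (us i) u \<ge> R/8) \<and> R + \<delta>/2 < dist v0 w0)"
    proof -
      consider (l) k where "k \<in> {0..M}" "c = lvl k" | (f) y where "y \<in> Fc" "c = far y" | (t) "c = tiny"
        using cCL unfolding CL_def by blast
      then show ?thesis
      proof cases
        case (l k)
        define R where "R = 2*(R0/2^k)"
        have Rle: "R \<le> 2*R0" unfolding R_def using R0 by (simp add: divide_le_eq)
        have "0 < R" unfolding R_def using R0 by simp
        moreover have "R < 1" using Rle R0 by linarith
        moreover have "\<forall>i\<in>c. \<forall>k'\<in>c. dist (us i) (us k') \<le> R"
          using l dist_rho unfolding lvl_def R_def by (smt (verit) mem_Collect_eq)
        moreover have "\<forall>i\<in>c. dist (us i) u \<ge> R/8"
          using l R0 unfolding lvl_def R_def \<rho>_def by (auto simp: field_simps)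
        moreover have "R + \<delta>/2 < dist v0 w0" using Rle R0 by linarith
        ultimately show ?thesis by blast
      next
        case (f y)
        have "\<forall>i\<in>c. \<forall>k'\<in>c. dist (us i) (us k') \<le> R0"
        proof (intro ballI)
          fix i k' assume "i \<in> c" "k' \<in> c"
          then have "dist y (us i) < R0/2" "dist y (us k') < R0/2" using f by (auto simp: far_def)
          then show "dist (us i) (us k') \<le> R0"
            using dist_triangle[of "us i" "us k'" y] dist_commute[of y "us i"] by linarith
        qed
        moreover have "\<forall>i\<in>c. dist (us i) u \<ge> R0/8" using f R0 by (auto simp: far_def \<rho>_def)
        moreover have "R0 < 1" using R0 by simp
        ultimately show ?thesis using R0 Dpos by blast
      next
        case t
        have fc: "finite c" using CLsub[OF cCL] finite_subset by blast
        have eqc: "\<forall>i\<in>c. \<forall>k\<in>c. i = k"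
          proof (intro ballI, rule ccontr)
            fix i k assume ik: "i \<in> c" "k \<in> c" "i \<noteq> k"
            then have "\<rho> i \<le> R0/2^M/2" "\<rho> k \<le> R0/2^M/2" "i < N" "k < N" using t by (auto simp: tiny_def)
            then have "dist (us i) (us k) \<le> R0/2^M" using dist_rho[of i k] by linarith
            also have "R0/2^M \<le> 1/2^M" using R0 by (simp add: divide_right_mono)
            also have "\<dots> \<le> \<delta>" by (rule M)
            finally show False using sep ik \<open>i < N\<close> \<open>k < N\<close> by fastforce
          qed
        have "card c \<le> Suc 0" using card_le_Suc0_iff_eq[OF fc] eqc by blast
        then show ?thesis by simp
      qed
    qed
  qed
  have cover: "(\<Sum>j<N. indicator (TB \<delta> (us j) (as j)) x :: real) \<le> (\<Sum>c\<in>CL. (\<Sum>i\<in>c. indicator (TB \<delta> (us i) (as i)) x))" for x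
  proof (rule sum_cover_le[where G="\<lambda>c. c", OF _ CLf])
    show "finite {..<N}" by simp
    show "\<And>c. c \<in> CL \<Longrightarrow> finite c" using CLsub finite_subset by blast
    show "\<And>i. 0 \<le> (indicator (TB \<delta> (us i) (as i)) x :: real)" by simp
    fix j assume j: "j \<in> {..<N}"
    show "\<exists>c\<in>CL. j \<in> c"
    proof (cases "\<rho> j \<le> R0/2^M/2")
      case True then have "j \<in> tiny" using j by (simp add: tiny_def)
      then show ?thesis unfolding CL_def by blast
    next
      case nt: False
      show ?thesis
      proof (cases "\<rho> j \<le> R0")
        case True
        have "R0/2^(M+1) < \<rho> j" using nt by (simp add: field_simps)
        then obtain k where "k \<le> M" "R0/2^k/2 < \<rho> j" "\<rho> j \<le> R0/2^k"
          using beta_level[OF R0(1) True] by blast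
        then have "j \<in> lvl k" "k \<in> {0..M}" using j by (auto simp: lvl_def)
        then show ?thesis unfolding CL_def by blast
      next
        case False
        have "us j \<in> Y" using Ju j by auto
        then obtain y where "y \<in> Fc" "us j \<in> ball y (R0/2)" using Fc by blast
        then have "j \<in> far y" "y \<in> Fc" using j False by (auto simp: far_def)
        then show ?thesis unfolding CL_def by blast
      qed
    qed
  qed
  have pt: "ennreal ((\<Sum>j<N. indicator (TB \<delta> (us j) (as j)) x) powr (1+q))
     \<le> ennreal (real (card CL) powr (1+q)) * (\<Sum>c\<in>CL. ennreal ((\<Sum>i\<in>c. indicator (TB \<delta> (us i) (as i)) x) powr (1+q)))" for x
  proof -
    have "(\<Sum>j<N. indicator (TB \<delta> (us j) (as j)) x) powr (1+q) \<le> (\<Sum>c\<in>CL. (\<Sum>i\<in>c. indicator (TB \<delta> (us i) (as i)) x :: real)) powr (1+q)"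
      using cover[of x] q_pos by (intro powr_mono2) (auto intro: sum_nonneg)
    also have "\<dots> \<le> real (card CL) powr (1+q) * (\<Sum>c\<in>CL. (\<Sum>i\<in>c. indicator (TB \<delta> (us i) (as i)) x :: real) powr (1+q))"
      using q_pos by (intro pow_sum_le CLf) (auto intro: sum_nonneg)
    finally have "ennreal ((\<Sum>j<N. indicator (TB \<delta> (us j) (as j)) x) powr (1+q))
       \<le> ennreal (real (card CL) powr (1+q) * (\<Sum>c\<in>CL. (\<Sum>i\<in>c. indicator (TB \<delta> (us i) (as i)) x :: real) powr (1+q)))"
      by (rule ennreal_leI)
    also have "\<dots> = ennreal (real (card CL) powr (1+q)) * ennreal (\<Sum>c\<in>CL. (\<Sum>i\<in>c. indicator (TB \<delta> (us i) (as i)) x :: real) powr (1+q))"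
      by (intro ennreal_mult) (auto intro: sum_nonneg)
    also have "ennreal (\<Sum>c\<in>CL. (\<Sum>i\<in>c. indicator (TB \<delta> (us i) (as i)) x :: real) powr (1+q))
       = (\<Sum>c\<in>CL. ennreal ((\<Sum>i\<in>c. indicator (TB \<delta> (us i) (as i)) x) powr (1+q)))"
      by (rule sum_ennreal[symmetric]) simp
    finally show ?thesis .
  qed
  have "(\<integral>\<^sup>+x. ennreal ((\<Sum>j<N. indicator (TB \<delta> (us j) (as j)) x) powr (1+q)) \<partial>\<mu>)
     \<le> (\<integral>\<^sup>+x. ennreal (real (card CL) powr (1+q)) * (\<Sum>c\<in>CL. ennreal ((\<Sum>i\<in>c. indicator (TB \<delta> (us i) (as i)) x) powr (1+q))) \<partial>\<mu>)"
    by (intro nn_integral_mono pt)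
  also have "\<dots> = ennreal (real (card CL) powr (1+q)) * (\<Sum>c\<in>CL. (\<integral>\<^sup>+x. ennreal ((\<Sum>i\<in>c. indicator (TB \<delta> (us i) (as i)) x) powr (1+q)) \<partial>\<mu>))"
  proof -
    have "(\<integral>\<^sup>+x. ennreal (real (card CL) powr (1+q)) * (\<Sum>c\<in>CL. ennreal ((\<Sum>i\<in>c. indicator (TB \<delta> (us i) (as i)) x) powr (1+q))) \<partial>\<mu>)
      = ennreal (real (card CL) powr (1+q)) * (\<integral>\<^sup>+x. (\<Sum>c\<in>CL. ennreal ((\<Sum>i\<in>c. indicator (TB \<delta> (us i) (as i)) x) powr (1+q))) \<partial>\<mu>)"
      by (rule nn_integral_cmult) measurable
    also have "(\<integral>\<^sup>+x. (\<Sum>c\<in>CL. ennreal ((\<Sum>i\<in>c. indicator (TB \<delta> (us i) (as i)) x) powr (1+q))) \<partial>\<mu>)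
      = (\<Sum>c\<in>CL. (\<integral>\<^sup>+x. ennreal ((\<Sum>i\<in>c. indicator (TB \<delta> (us i) (as i)) x) powr (1+q)) \<partial>\<mu>))"
      by (rule nn_integral_sum) measurable
    finally show ?thesis .
  qed
  also have "\<dots> \<le> ennreal (real (card CL) powr (1+q)) * (\<Sum>c\<in>CL. ennreal (real (card c) * K1))"
    using cls_bd by (intro mult_left_mono sum_mono) auto
  also have "\<dots> \<le> ennreal (real (card CL) powr (1+q)) * (\<Sum>c\<in>CL. ennreal (real N * K1))"
  proof (intro mult_left_mono sum_mono ennreal_leI mult_right_mono K1)
    fix c assume "c \<in> CL"
    then have "card c \<le> card {..<N}" using CLsub by (intro card_mono) auto
    then show "real (card c) \<le> real N" by simp
  qed auto
  also have "\<dots> = ennreal (real (card CL) powr (1+q) * (real (card CL) * (real N * K1)))"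
  proof -
    have "(\<Sum>c\<in>CL. ennreal (real N * K1)) = ennreal (real (card CL) * (real N * K1))"
      using K1 by (intro sum_const_ennreal) simp
    then show ?thesis using K1 by (simp add: ennreal_mult)
  qed
  also have "\<dots> \<le> ennreal (real (M + card Fc + 2) powr (2+q) * K1 * real N)"
  proof (intro ennreal_leI)
    have L1: "real (card CL) powr (1+q) * real (card CL) = real (card CL) powr (2+q)"
    proof (cases "card CL = 0")
      case True then show ?thesis by simp
    next
      case False
      have "real (card CL) powr ((1+q) + 1) = real (card CL) powr (1+q) * real (card CL) powr 1"
        by (rule powr_add)
      moreover have "(1+q) + 1 = 2 + q" by simp
      ultimately show ?thesis by simp
    qed
    have "real (card CL) powr (2+q) \<le> real (M + card Fc + 2) powr (2+q)"
      using cardCL q_pos by (intro powr_mono2) auto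
    then have "real (card CL) powr (1+q) * (real (card CL) * (real N * K1)) \<le> real (M + card Fc + 2) powr (2+q) * (real N * K1)"
      using L1 K1 by (simp add: mult.assoc[symmetric] mult_right_mono)
    then show "real (card CL) powr (1+q) * (real (card CL) * (real N * K1)) \<le> real (M + card Fc + 2) powr (2+q) * K1 * real N"
      by (simp add: mult_ac)
  qed
  finally show ?thesis unfolding K1_def by (simp add: mult_ac)
qed

end

lemma ln_le_pow:
  fixes \<delta> \<epsilon> :: real
  assumes d: "0 < \<delta>" "\<delta> < 1" and e: "\<epsilon> > 0"
  shows "ln (1/\<delta>) \<le> (1/\<epsilon>) * \<delta> powr (-\<epsilon>)"
proof -
  define y where "y = \<delta> powr (-\<epsilon>)"
  have y: "y > 0" using d by (simp add: y_def)
  have "ln y = \<epsilon> * ln (1/\<delta>)" using d by (simp add: y_def ln_powr ln_div)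
  moreover have "ln y \<le> y - 1" using y by (rule ln_le_minus_one)
  ultimately have "\<epsilon> * ln (1/\<delta>) \<le> y" by linarith
  then have "ln (1/\<delta>) \<le> y / \<epsilon>" using e by (simp add: field_simps)
  then show ?thesis by (simp add: y_def)
qed

lemma log_poly_bound:
  fixes \<delta> \<epsilon> Aa Bb :: real
  assumes d: "0 < \<delta>" "\<delta> < 1" and e: "\<epsilon> > 0" and AB: "Aa \<ge> 0" "Bb \<ge> 0"
  shows "(Aa + Bb * ln (1/\<delta>))^5 \<le> (Aa + Bb * (5/\<epsilon>))^5 * \<delta> powr (-\<epsilon>)"
proof -
  define y where "y = \<delta> powr (-\<epsilon>/5)"
  have y1: "y \<ge> 1" unfolding y_def using d e by (intro powr_ge1_neg) auto
  have "ln (1/\<delta>) \<le> (1/(\<epsilon>/5)) * \<delta> powr (-(\<epsilon>/5))" using ln_le_pow[OF d, of "\<epsilon>/5"] e by simp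
  then have l: "ln (1/\<delta>) \<le> (5/\<epsilon>) * y" by (simp add: y_def)
  have ln0: "ln (1/\<delta>) \<ge> 0" using d by simp
  have "Aa + Bb * ln (1/\<delta>) \<le> Aa + Bb * ((5/\<epsilon>) * y)" using l AB by (intro add_left_mono mult_left_mono) auto
  also have "\<dots> \<le> (Aa + Bb * (5/\<epsilon>)) * y"
  proof -
    have "Aa \<le> Aa * y" using mult_left_mono[OF y1 AB(1)] by simp
    then show ?thesis by (simp add: algebra_simps)
  qed
  finally have le: "Aa + Bb * ln (1/\<delta>) \<le> (Aa + Bb * (5/\<epsilon>)) * y" .
  have "(Aa + Bb * ln (1/\<delta>))^5 \<le> ((Aa + Bb * (5/\<epsilon>)) * y)^5"
    using le AB ln0 by (intro power_mono) auto
  also have "\<dots> = (Aa + Bb * (5/\<epsilon>))^5 * y^5" by (simp add: power_mult_distrib)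
  also have "y^5 = \<delta> powr (-\<epsilon>)"
  proof -
    have "y^5 = y powr (real 5)" using y1 by (simp add: powr_realpow)
    also have "\<dots> = \<delta> powr (-\<epsilon>/5 * 5)" using d unfolding y_def by (simp add: powr_powr)
    finally show ?thesis by simp
  qed
  finally show ?thesis .
qed

lemma M_choice:
  fixes \<delta> :: real
  assumes d: "0 < \<delta>" "\<delta> < 1"
  defines "M \<equiv> nat \<lceil>log 2 (1/\<delta>)\<rceil> + 1"
  shows "1/2^M \<le> \<delta>" "M \<ge> 1" "real M \<le> ln (1/\<delta>) / ln 2 + 2"
proof -
  have lp: "log 2 (1/\<delta>) > 0" using d by simp
  have e1: "2 powr (log 2 (1/\<delta>)) = 1/\<delta>" using d by simp
  have e2: "2 powr (log 2 (1/\<delta>)) \<le> 2 powr (real M)"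
    unfolding M_def using lp by (intro powr_mono) linarith+
  have e3: "2 powr (real M) = 2^M" by (simp add: powr_realpow)
  have "1/\<delta> \<le> 2^M" using e1 e2 e3 by linarith
  then show "1/2^M \<le> \<delta>" using d by (simp add: field_simps)
  show "M \<ge> 1" unfolding M_def by simp
  have "real M \<le> log 2 (1/\<delta>) + 2" unfolding M_def using lp by linarith
  then show "real M \<le> ln (1/\<delta>) / ln 2 + 2" by (simp add: log_def)
qed


context hbl begin

lemma L_arith:
  fixes \<delta> :: real and M F :: nat
  assumes d: "0 < \<delta>" "\<delta> < 1" and M: "real M \<le> ln (1/\<delta>) / ln 2 + 2"
  shows "real (M + F + 2) powr (2+q) * (c2 + real ((M+1)*(M+1)) * KG)
     \<le> (c2 + KG) * (real F + 4 + (1/ln 2) * ln (1/\<delta>))^5"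
proof -
  define L where "L = real (M + F + 2)"
  have L1: "L \<ge> 1" by (simp add: L_def)
  have "L powr (2+q) \<le> L powr (3::real)" using L1 q by (intro powr_mono) auto
  also have "L powr (3::real) = L^3" using L1 powr_realpow[of L 3] by simp
  finally have p1: "L powr (2+q) \<le> L^3" .
  have LM: "real (M+1) \<le> L" unfolding L_def by simp
  have M1: "real ((M+1)*(M+1)) \<le> L^2"
  proof -
    have "real (M+1) * real (M+1) \<le> L * L" using LM by (intro mult_mono) auto
    moreover have "real ((M+1)*(M+1)) = real (M+1) * real (M+1)" by (rule of_nat_mult)
    ultimately show ?thesis by (simp only: power2_eq_square)
  qed
  have "c2 + real ((M+1)*(M+1)) * KG \<le> (c2 + KG) * real ((M+1)*(M+1))"
  proof -
    have "c2 \<le> c2 * real ((M+1)*(M+1))" using c2 by simp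
    then show ?thesis by (simp add: algebra_simps)
  qed
  also have "\<dots> \<le> (c2 + KG) * L^2" using M1 c2 KG_nn by (intro mult_left_mono) auto
  finally have p2: "c2 + real ((M+1)*(M+1)) * KG \<le> (c2 + KG) * L^2" .
  have "L powr (2+q) * (c2 + real ((M+1)*(M+1)) * KG) \<le> L^3 * ((c2 + KG) * L^2)"
    using p1 p2 c2 KG_nn L1 by (intro mult_mono) auto
  also have "\<dots> = (c2 + KG) * L^5"
  proof -
    have "L^5 = L^3 * L^2" by (simp add: power_add[symmetric])
    then show ?thesis by (simp only: mult_ac)
  qed
  also have "L \<le> real F + 4 + (1/ln 2) * ln (1/\<delta>)" unfolding L_def using M by simp
  then have "L^5 \<le> (real F + 4 + (1/ln 2) * ln (1/\<delta>))^5" using L1 by (intro power_mono) auto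
  then have "(c2 + KG) * L^5 \<le> (c2 + KG) * (real F + 4 + (1/ln 2) * ln (1/\<delta>))^5"
    using c2 KG_nn by (intro mult_left_mono) auto
  finally show ?thesis unfolding L_def .
qed

end

context hbl begin

lemma Eeps: "\<epsilon> > 0 \<Longrightarrow> 1 - q*(lam+\<alpha>) - \<epsilon> \<le> 0"
proof -
  assume e: "\<epsilon> > 0"
  have "q * (1 + \<alpha>) \<le> q * (lam + \<alpha>)" using lam alpha q_pos S by (intro mult_left_mono) auto
  moreover have "q * (1 + \<alpha>) \<ge> 1" using q alpha by (simp add: field_simps)
  ultimately show ?thesis using e by linarith
qed

lemma bounded_final:
  assumes e: "\<epsilon> > 0" and hb: "hairbrush Y A It W N \<delta> us as" and NB: "N \<le> Nb" and C: "real Nb powr q * c2 \<le> C"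
  shows "(\<integral>\<^sup>+x. ennreal ((\<Sum>j<N. indicator (TB \<delta> (us j) (as j)) x) powr (1+q)) \<partial>\<mu>)
       \<le> ennreal (C * \<delta> powr Tx * real N * \<delta> powr (1 - q*(lam+\<alpha>) - \<epsilon>))"
proof -
  have d: "0 < \<delta>" "\<delta> < 1" and Ju: "\<forall>j<N. us j \<in> Y \<and> as j \<in> A" using hb unfolding hairbrush_def by auto
  have "(\<integral>\<^sup>+x. ennreal ((\<Sum>j<N. indicator (TB \<delta> (us j) (as j)) x) powr (1+q)) \<partial>\<mu>)
     \<le> ennreal (real Nb powr q * c2 * \<delta> powr Tx * real N)" by (rule bounded_N_bound[OF d Ju NB])
  also have "\<dots> \<le> ennreal (C * \<delta> powr Tx * real N * \<delta> powr (1 - q*(lam+\<alpha>) - \<epsilon>))"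
  proof (intro ennreal_leI)
    have g1: "1 \<le> \<delta> powr (1 - q*(lam+\<alpha>) - \<epsilon>)" using powr_ge1_neg[OF d(1) _ Eeps[OF e]] d by simp
    have "real Nb powr q * c2 * \<delta> powr Tx * real N \<le> C * \<delta> powr Tx * real N"
      using C by (intro mult_right_mono) auto
    also have "\<dots> \<le> C * \<delta> powr Tx * real N * \<delta> powr (1 - q*(lam+\<alpha>) - \<epsilon>)"
    proof -
      have "0 \<le> C" using C c2 by (smt (verit) powr_ge_zero mult_nonneg_nonneg)
      then have "0 \<le> C * \<delta> powr Tx * real N" by simp
      then show ?thesis using mult_left_mono[OF g1] by simp
    qed
    finally show "real Nb powr q * c2 * \<delta> powr Tx * real N \<le> C * \<delta> powr Tx * real N * \<delta> powr (1 - q*(lam+\<alpha>) - \<epsilon>)" .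
  qed
  finally show ?thesis .
qed

lemma tb: "e > 0 \<Longrightarrow> \<exists>F. finite F \<and> F \<subseteq> Y \<and> Y \<subseteq> (\<Union>x\<in>F. ball x e)"
  using seq_compact_imp_totally_bounded[OF compact_imp_seq_compact[OF Ycomp]] by blast

lemma hb_main:
  assumes e: "\<epsilon> > 0"
  shows "\<exists>C>0. \<forall>N \<delta> us as. hairbrush Y A It W N \<delta> us as \<longrightarrow>
     (\<integral>\<^sup>+x. ennreal ((\<Sum>j<N. indicator (TB \<delta> (us j) (as j)) x) powr (1+q)) \<partial>\<mu>)
       \<le> ennreal (C * \<delta> powr Tx * real N * \<delta> powr (1 - q*(lam+\<alpha>) - \<epsilon>))"
proof (cases "\<exists>v0\<in>Y. \<exists>w0\<in>Y. v0 \<noteq> w0")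
  case False
  show ?thesis
  proof (intro exI[of _ c2] conjI allI impI)
    show "0 < c2" by (rule c2)
    fix N \<delta> us as assume hb: "hairbrush Y A It W N \<delta> us as"
    have N1: "N \<le> 1"
    proof (rule ccontr)
      assume "\<not> N \<le> 1"
      then have "0 < N" "1 < N" by auto
      then have "dist (us 0) (us 1) > \<delta>" "us 0 \<in> Y" "us 1 \<in> Y" "\<delta> > 0" using hb unfolding hairbrush_def by auto
      moreover have "us 0 = us 1" using False \<open>us 0 \<in> Y\<close> \<open>us 1 \<in> Y\<close> by blast
      ultimately show False by simp
    qed
    show "(\<integral>\<^sup>+x. ennreal ((\<Sum>j<N. indicator (TB \<delta> (us j) (as j)) x) powr (1+q)) \<partial>\<mu>)
       \<le> ennreal (c2 * \<delta> powr Tx * real N * \<delta> powr (1 - q*(lam+\<alpha>) - \<epsilon>))"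
      by (rule bounded_final[OF e hb N1]) simp
  qed
next
  case True
  then obtain v0 w0 where vw: "v0 \<in> Y" "w0 \<in> Y" "v0 \<noteq> w0" by blast
  define D where "D = dist v0 w0"
  have D: "D > 0" using vw by (simp add: D_def)
  define R0 where "R0 = min (1/4) (D/8)"
  define \<delta>0 where "\<delta>0 = min (1/2) (D/2)"
  have R0: "0 < R0" "R0 \<le> 1/4" "R0 \<le> D/8" using D by (auto simp: R0_def)
  have d0: "0 < \<delta>0" "\<delta>0 \<le> 1/2" "\<delta>0 \<le> D/2" using D by (auto simp: \<delta>0_def)
  obtain Fc where Fc: "finite Fc" "Fc \<subseteq> Y" "Y \<subseteq> (\<Union>x\<in>Fc. ball x (R0/2))" using tb[of "R0/2"] R0 by auto
  obtain F2 where F2: "finite F2" "F2 \<subseteq> Y" "Y \<subseteq> (\<Union>x\<in>F2. ball x (\<delta>0/2))" using tb[of "\<delta>0/2"] d0 by auto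
  define Aa where "Aa = real (card Fc) + 4"
  define Bb where "Bb = 1 / ln (2::real)"
  define Cs where "Cs = (c2 + KG) * (Aa + Bb * (5/\<epsilon>))^5"
  define Cb where "Cb = real (card F2) powr q * c2"
  have AB: "Aa \<ge> 0" "Bb \<ge> 0" by (auto simp: Aa_def Bb_def)
  have Cs: "Cs \<ge> 0" using c2 KG_nn AB e by (simp add: Cs_def)
  have Cb: "Cb \<ge> 0" using c2 by (simp add: Cb_def)
  show ?thesis
  proof (intro exI[of _ "c2 + Cb + Cs"] conjI allI impI)
    show "0 < c2 + Cb + Cs" using c2 Cb Cs by simp
    fix N \<delta> us as assume hb: "hairbrush Y A It W N \<delta> us as"
    have d: "0 < \<delta>" "\<delta> < 1" and Ju: "\<forall>j<N. us j \<in> Y \<and> as j \<in> A"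
      and sep: "\<forall>j<N. \<forall>k<N. j \<noteq> k \<longrightarrow> dist (us j) (us k) > \<delta>"
      using hb unfolding hairbrush_def by auto
    have g0: "0 \<le> \<delta> powr Tx * real N * \<delta> powr (1 - q*(lam+\<alpha>) - \<epsilon>)" by simp
    show "(\<integral>\<^sup>+x. ennreal ((\<Sum>j<N. indicator (TB \<delta> (us j) (as j)) x) powr (1+q)) \<partial>\<mu>)
       \<le> ennreal ((c2 + Cb + Cs) * \<delta> powr Tx * real N * \<delta> powr (1 - q*(lam+\<alpha>) - \<epsilon>))"
    proof (cases "\<delta> < \<delta>0")
      case False
      have "N \<le> card F2"
        by (rule sep_card[OF F2(1) F2(3)]) (use False Ju sep in auto)
      then show ?thesis by (rule bounded_final[OF e hb]) (use Cs Cb_def c2 in simp)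
    next
      case True
      define M where "M = nat \<lceil>log 2 (1/\<delta>)\<rceil> + 1"
      have M: "1/2^M \<le> \<delta>" "M \<ge> 1" "real M \<le> ln (1/\<delta>) / ln 2 + 2"
        using M_choice[OF d] unfolding M_def by auto
      have "(\<integral>\<^sup>+x. ennreal ((\<Sum>j<N. indicator (TB \<delta> (us j) (as j)) x) powr (1+q)) \<partial>\<mu>)
         \<le> ennreal (real (M + card Fc + 2) powr (2+q) * ((c2 + real ((M+1)*(M+1)) * KG) * \<delta> powr Tx * \<delta> powr (1 - q*(lam+\<alpha>))) * real N)"
      proof (rule main_classes[OF vw(1,2) R0(1,2) _ Fc(1,3) hb _ M(1,2)])
        show "2*R0 + \<delta>/2 < dist v0 w0" using R0 d0 True D unfolding D_def by linarith
        show "\<delta> \<le> 1/2" using True d0 by linarith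
      qed
      also have "\<dots> \<le> ennreal ((c2 + Cb + Cs) * \<delta> powr Tx * real N * \<delta> powr (1 - q*(lam+\<alpha>) - \<epsilon>))"
      proof (intro ennreal_leI)
        define P where "P = \<delta> powr Tx * \<delta> powr (1 - q*(lam+\<alpha>)) * real N"
        have P: "P \<ge> 0" by (simp add: P_def)
        have "real (M + card Fc + 2) powr (2+q) * (c2 + real ((M+1)*(M+1)) * KG)
            \<le> (c2 + KG) * (real (card Fc) + 4 + (1/ln 2) * ln (1/\<delta>))^5"
          by (rule L_arith[OF d M(3)])
        also have "(real (card Fc) + 4 + (1/ln 2) * ln (1/\<delta>))^5 \<le> (Aa + Bb * (5/\<epsilon>))^5 * \<delta> powr (-\<epsilon>)"
          using log_poly_bound[OF d e AB] by (simp add: Aa_def Bb_def)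
        then have "(c2 + KG) * (real (card Fc) + 4 + (1/ln 2) * ln (1/\<delta>))^5 \<le> (c2 + KG) * ((Aa + Bb * (5/\<epsilon>))^5 * \<delta> powr (-\<epsilon>))"
          using c2 KG_nn by (intro mult_left_mono) auto
        finally have k: "real (M + card Fc + 2) powr (2+q) * (c2 + real ((M+1)*(M+1)) * KG) \<le> Cs * \<delta> powr (-\<epsilon>)"
          by (simp add: Cs_def mult.assoc)
        have "real (M + card Fc + 2) powr (2+q) * ((c2 + real ((M+1)*(M+1)) * KG) * \<delta> powr Tx * \<delta> powr (1 - q*(lam+\<alpha>))) * real N
           = (real (M + card Fc + 2) powr (2+q) * (c2 + real ((M+1)*(M+1)) * KG)) * P"
          by (simp add: P_def mult_ac)
        also have "\<dots> \<le> (Cs * \<delta> powr (-\<epsilon>)) * P" using k P by (rule mult_right_mono)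
        also have "\<dots> = Cs * \<delta> powr Tx * real N * \<delta> powr (1 - q*(lam+\<alpha>) - \<epsilon>)"
        proof -
          have "\<delta> powr (1 - q*(lam+\<alpha>) - \<epsilon>) = \<delta> powr (1 - q*(lam+\<alpha>)) * \<delta> powr (-\<epsilon>)"
            by (simp add: powr_add[symmetric])
          then show ?thesis by (simp add: P_def mult_ac)
        qed
        also have "\<dots> \<le> (c2 + Cb + Cs) * \<delta> powr Tx * real N * \<delta> powr (1 - q*(lam+\<alpha>) - \<epsilon>)"
          using c2 Cb g0 by (simp add: mult.assoc mult_right_mono)
        finally show "real (M + card Fc + 2) powr (2+q) * ((c2 + real ((M+1)*(M+1)) * KG) * \<delta> powr Tx * \<delta> powr (1 - q*(lam+\<alpha>))) * real N
           \<le> (c2 + Cb + Cs) * \<delta> powr Tx * real N * \<delta> powr (1 - q*(lam+\<alpha>) - \<epsilon>)" .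
      qed
      finally show ?thesis .
    qed
  qed
qed

end

theorem mainTheorem7:
  fixes \<mu> :: "'x::polish_space measure" and d' :: "'x \<Rightarrow> 'x \<Rightarrow> real"
    and Y :: "'z::metric_space set" and \<nu> :: "'z measure" and A :: "'a set"
    and F I It :: "'z \<Rightarrow> 'a \<Rightarrow> 'x set" and mu :: "'z \<Rightarrow> 'a \<Rightarrow> 'x measure"
    and Q C0 S c0t C0t c c' cb W Tx \<theta> \<alpha> lam :: real
  assumes "base_setting \<mu> Q C0 d' Y \<nu> S c0t C0t"
    and "family_setting d' Y A F I It mu c c' cb"
    and "axiom_A1 \<mu> Q d' Y A I It W S Tx"
    and "axiom_A2 \<mu> Q Y A F I mu S Tx \<theta>"
    and "axiom_A3 d' Y A It W"
    and "axiom_A4 Y A I It W"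
    and "axiom_A5 Q d' Y A It W S Tx \<theta> \<alpha> lam"
  shows "\<forall>\<epsilon>>0. \<forall>p. (\<alpha> + 2) / (\<alpha> + 1) \<le> p \<and> p \<le> 2 \<longrightarrow>
           (\<exists>C>0. \<forall>N \<delta> us as. hairbrush Y A It W N \<delta> us as \<longrightarrow>
              (\<integral>\<^sup>+ x. ennreal ((\<Sum>j<N. indicator (btube It W \<delta> (us j) (as j)) x) powr p) \<partial>\<mu>)
                \<le> ennreal (C * \<delta> powr Tx * real N *
                            \<delta> powr (lam + \<alpha> + 1 - p * (lam + \<alpha>) - \<epsilon>)))"
proof (intro allI impI)
  fix \<epsilon> p :: real
  assume e: "\<epsilon> > 0" and pr: "(\<alpha> + 2) / (\<alpha> + 1) \<le> p \<and> p \<le> 2"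
  have BS: "sets \<mu> = sets borel \<and> Q > 1/2 \<and> C0 > 0 \<and>
     (\<forall>x r. 0 < r \<and> (\<exists>y z::'x. r < dist y z) \<longrightarrow> emeasure \<mu> (cball x r) \<le> ennreal (C0 * r powr Q)) \<and>
     Metric_space UNIV d' \<and> separable_space (Metric_space.mtopology UNIV d') \<and>
     compact Y \<and> sets \<nu> = sets borel \<and> 0 < emeasure \<nu> Y \<and> emeasure \<nu> Y \<le> 1 \<and>
     1 \<le> S \<and> S < 2 * Q \<and> 0 < c0t \<and> c0t \<le> C0t \<and>
     (\<forall>u\<in>Y. \<forall>r. 0 < r \<and> (\<exists>v\<in>Y. \<exists>w\<in>Y. r < dist v w) \<longrightarrow>
        ennreal (c0t * r powr S) \<le> emeasure \<nu> (cball u r) \<and>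
        emeasure \<nu> (cball u r) \<le> ennreal (C0t * r powr S))"
    using assms(1) unfolding base_setting_def .
  have bs1: "sets \<mu> = sets borel" using BS by (elim conjE) assumption
  have bs2: "Metric_space UNIV d'" using BS by (elim conjE) assumption
  have bs3: "compact Y" using BS by (elim conjE) assumption
  have bs4: "sets \<nu> = sets borel" using BS by (elim conjE) assumption
  have bs5: "1 \<le> S" using BS by (elim conjE) assumption
  have bs6: "0 < c0t" using BS by (elim conjE) assumption
  have bs7: "c0t \<le> C0t" using BS by (elim conjE) assumption
  have bs8: "\<forall>u\<in>Y. \<forall>r. 0 < r \<and> (\<exists>v\<in>Y. \<exists>w\<in>Y. r < dist v w) \<longrightarrow>
        ennreal (c0t * r powr S) \<le> emeasure \<nu> (cball u r) \<and>
        emeasure \<nu> (cball u r) \<le> ennreal (C0t * r powr S)" using BS by (elim conjE) assumption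
  obtain c1 c2 where A1: "0 < c1" "c1 \<le> c2" and A1b: "\<forall>a\<in>A. \<forall>\<delta>. 0 < \<delta> \<and> \<delta> < 1 \<longrightarrow>
          continuous_on Y (\<lambda>u. measure \<mu> (tube I \<delta> u a)) \<and>
          (\<forall>u\<in>Y. ennreal (c1 * \<delta> powr Tx) \<le> emeasure \<mu> (tube I \<delta> u a) \<and>
                  emeasure \<mu> (tube I \<delta> u a) \<le> emeasure \<mu> (btube It W \<delta> u a) \<and>
                  emeasure \<mu> (btube It W \<delta> u a) \<le> ennreal (c2 * \<delta> powr Tx) \<and>
                  (\<forall>B. B \<subseteq> btube It W \<delta> u a \<longrightarrow>
                     emeasure \<mu> B \<le> ennreal c2 * diam2 d' B * ennreal (\<delta> powr Tx)))"
    using assms(3) unfolding axiom_A1_def by (elim exE conjE) (rule that; assumption)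
  have A1a: "\<forall>a\<in>A. \<forall>\<delta>. 0 < \<delta> \<and> \<delta> < 1 \<longrightarrow> (\<forall>u\<in>Y.
          emeasure \<mu> (btube It W \<delta> u a) \<le> ennreal (c2 * \<delta> powr Tx) \<and>
          (\<forall>B. B \<subseteq> btube It W \<delta> u a \<longrightarrow>
                     emeasure \<mu> B \<le> ennreal c2 * diam2 d' B * ennreal (\<delta> powr Tx)))"
  proof (intro ballI allI impI)
    fix a and \<delta> :: real and u assume h: "a \<in> A" "0 < \<delta> \<and> \<delta> < 1" "u \<in> Y"
    from bspec[OF conjunct2[OF A1b[rule_format, OF h(1) h(2)]] h(3)] show "emeasure \<mu> (btube It W \<delta> u a) \<le> ennreal (c2 * \<delta> powr Tx) \<and>
          (\<forall>B. B \<subseteq> btube It W \<delta> u a \<longrightarrow>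
                     emeasure \<mu> B \<le> ennreal c2 * diam2 d' B * ennreal (\<delta> powr Tx))"
      by (rule conjunct2[OF conjunct2])
  qed
  obtain b where b: "b > 0" and A3: "\<forall>a\<in>A. \<forall>a'\<in>A. \<forall>u\<in>Y. \<forall>v\<in>Y. \<forall>\<delta>. 0 < \<delta> \<and> \<delta> < 1 \<and> u \<noteq> v \<longrightarrow>
        diam2 d' (btube It W \<delta> u a \<inter> btube It W \<delta> v a') \<le> ennreal (b * \<delta> / dist u v)"
    using assms(5) unfolding axiom_A3_def by (elim exE conjE) (rule that; assumption)
  have A5all: "0 \<le> \<alpha> \<and> \<alpha> \<le> S - 1 \<and> (\<theta> \<noteq> 0 \<longrightarrow> \<alpha> \<le> Q / \<theta> - 2) \<and>
     max (S - \<alpha>) (S - 2 * Tx + 2) \<le> lam \<and>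
     lam < 2 * Q - 2 * Tx + S + 2 - 2 * \<theta> * (\<alpha> + 2) \<and>
     (\<exists>C'>0. \<forall>\<delta> \<beta> \<gamma> (N::nat) (us::nat \<Rightarrow> 'z) (as::nat \<Rightarrow> 'a) u a.
        0 < \<delta> \<and> \<delta> < 1 \<and> 0 < \<beta> \<and> \<beta> < 1 \<and> 0 < \<gamma> \<and> \<gamma> < 1 \<and>
        (\<forall>j<N. us j \<in> Y \<and> as j \<in> A) \<and> u \<in> Y \<and> a \<in> A \<and>
        (\<forall>j<N. \<forall>k<N. j \<noteq> k \<longrightarrow> dist (us j) (us k) > \<delta>) \<and>
        (\<forall>j<N. btube It W \<delta> u a \<inter> btube It W \<delta> (us j) (as j) \<noteq> {} \<and>
                dist (us j) u \<ge> \<beta> / 8) \<longrightarrow>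
        (\<forall>j<N. real (card {i. i < N \<and> dist (us i) (us j) \<le> \<beta> \<and>
              btube It W \<delta> (us i) (as i) \<inter> btube It W \<delta> (us j) (as j) \<noteq> {} \<and>
              setdist2 d' (btube It W \<delta> (us i) (as i) \<inter> btube It W \<delta> (us j) (as j))
                          (btube It W \<delta> (us j) (as j) \<inter> btube It W \<delta> u a) \<ge> ennreal \<gamma>})
           \<le> C' * \<delta> powr (- lam) * \<beta> * \<gamma> powr (- \<alpha>)))"
    using assms(7) unfolding axiom_A5_def .
  then obtain C' where C': "C' > 0" and A5: "\<forall>\<delta> \<beta> \<gamma> (N::nat) (us::nat \<Rightarrow> 'z) (as::nat \<Rightarrow> 'a) u a.
        0 < \<delta> \<and> \<delta> < 1 \<and> 0 < \<beta> \<and> \<beta> < 1 \<and> 0 < \<gamma> \<and> \<gamma> < 1 \<and>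
        (\<forall>j<N. us j \<in> Y \<and> as j \<in> A) \<and> u \<in> Y \<and> a \<in> A \<and>
        (\<forall>j<N. \<forall>k<N. j \<noteq> k \<longrightarrow> dist (us j) (us k) > \<delta>) \<and>
        (\<forall>j<N. btube It W \<delta> u a \<inter> btube It W \<delta> (us j) (as j) \<noteq> {} \<and>
                dist (us j) u \<ge> \<beta> / 8) \<longrightarrow>
        (\<forall>j<N. real (card {i. i < N \<and> dist (us i) (us j) \<le> \<beta> \<and>
              btube It W \<delta> (us i) (as i) \<inter> btube It W \<delta> (us j) (as j) \<noteq> {} \<and>
              setdist2 d' (btube It W \<delta> (us i) (as i) \<inter> btube It W \<delta> (us j) (as j))
                          (btube It W \<delta> (us j) (as j) \<inter> btube It W \<delta> u a) \<ge> ennreal \<gamma>})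
           \<le> C' * \<delta> powr (- lam) * \<beta> * \<gamma> powr (- \<alpha>))"
    by (elim exE conjE) (rule that; assumption)
  have al: "0 \<le> \<alpha>" "\<alpha> \<le> S - 1" and lm: "S - \<alpha> \<le> lam" using A5all by auto
  have q1: "1/(\<alpha>+1) \<le> p - 1"
  proof -
    have "(\<alpha> + 2) / (\<alpha> + 1) = 1 + 1/(\<alpha>+1)" using al by (simp add: field_simps)
    then show ?thesis using pr by linarith
  qed
  have q2: "p - 1 \<le> 1" using pr by simp
  interpret H: hbl \<mu> d' Y \<nu> A It W S Tx \<alpha> lam c2 b C' c0t C0t "p - 1"
  proof (rule hbl.intro)
  qed (use bs1 bs2 bs3 bs4 bs5 bs6 bs7 bs8 A1 A1a b A3 C' A5 al lm q1 q2 in \<open>simp_all only:\<close>)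
  obtain C where C: "C > 0" and HC: "\<forall>N \<delta> us as. hairbrush Y A It W N \<delta> us as \<longrightarrow>
     (\<integral>\<^sup>+x. ennreal ((\<Sum>j<N. indicator (btube It W \<delta> (us j) (as j)) x) powr (1 + (p - 1))) \<partial>\<mu>)
       \<le> ennreal (C * \<delta> powr Tx * real N * \<delta> powr (1 - (p - 1)*(lam+\<alpha>) - \<epsilon>))"
    using H.hb_main[OF e] by blast
  have ex1: "1 + (p - 1) = p" by simp
  have ex2: "1 - (p - 1)*(lam+\<alpha>) - \<epsilon> = lam + \<alpha> + 1 - p * (lam + \<alpha>) - \<epsilon>" by (simp add: algebra_simps)
  show "\<exists>C>0. \<forall>N \<delta> us as. hairbrush Y A It W N \<delta> us as \<longrightarrow>
              (\<integral>\<^sup>+ x. ennreal ((\<Sum>j<N. indicator (btube It W \<delta> (us j) (as j)) x) powr p) \<partial>\<mu>)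
                \<le> ennreal (C * \<delta> powr Tx * real N *
                            \<delta> powr (lam + \<alpha> + 1 - p * (lam + \<alpha>) - \<epsilon>))"
    using C HC unfolding ex1 ex2 by blast
qed


end
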